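(* Let $\succ$ be a binary relation on $\mathcal{F}$. Then $\succ$ satisfies Axioms A1, A2, A3, A5, A6, A7 below if and only if there exist a non-constant affine function $u:X\to\mathbb{R}$, unique up to positive affine transformation, and a unique pair of monotonic constant-linear functionals $I_p,I_o:B_0(\Sigma)\to\mathbb{R}$ with $I_p(u(h))\le I_o(u(h))$ for all $h\in\mathcal{F}$, such that for all $f,g\in\mathcal{F}$, $$f\succ g\iff\begin{cases}I_p(u(f))>I_p(u(g)),\\ I_o(u(f))>I_o(u(g)).\end{cases}$$ Axioms: (A1) $\succ$ is asymmetric and transitive, and its restriction to $X$ is non-trivial and negatively transitive. (A2) For all $f,g,h\in\mathcal{F}$, $\{\alpha\in[0,1]:\alpha f+(1-\alpha)g\succ h\}$ and $\{\alpha\in[0,1]:h\succ\alpha f+(1-\alpha)g\}$ are open in $[0,1]$. (A3) For all $f,g\in\mathcal{F}$, $x\in X$, $\alpha\in(0,1)$: $f\succ g$ iff $\alpha f+(1-\alpha)x\succ\alpha g+(1-\alpha)x$. (A5) If $f(s)\succ g(s)$ for all $s\in S$ then $f\succ g$. (A6) If for all $x\in X$, $f\Join x$ implies $g\Join x$, then $f\Join g$. (A7) If $f\Join x$, $x\succ g$, $g\Join y$, $f\succ y$ (with $x,y\in X$), then $f\succ g$.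
   Context: $S$ is a set of states with algebra $\Sigma$; $X$ is a non-singleton convex subset of a real vector space; $\mathcal{F}$ is the set of simple acts $f:S\to X$ ($\Sigma$-measurable, finitely many values) with pointwise mixtures; elements of $X$ are identified with constant acts. $f\Join g$ means $f\not\succ g$ and $g\not\succ f$. $B_0(\Sigma)$ is the set of real-valued $\Sigma$-measurable simple functions on $S$; $u(f)$ denotes $s\mapsto u(f(s))\in B_0(\Sigma)$. A functional $I:B_0(\Sigma)\to\mathbb{R}$ is constant-linear if $I(a\varphi+b)=aI(\varphi)+b$ for all $\varphi\in B_0(\Sigma)$, $a\ge0$, $b\in\mathbb{R}$ ($b$ the constant function), and monotonic if $\varphi\ge\psi$ pointwise implies $I(\varphi)\ge I(\psi)$. *)

theory Defs
  imports "HOL-Analysis.Analysis"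
begin

definition acts :: "'s set set \<Rightarrow> 'x set \<Rightarrow> ('s \<Rightarrow> 'x) set" where
  "acts \<Sigma> X = {f. range f \<subseteq> X \<and> finite (range f) \<and> (\<forall>x. f -` {x} \<in> \<Sigma>)}"

definition B0 :: "'s set set \<Rightarrow> ('s \<Rightarrow> real) set" where
  "B0 \<Sigma> = {\<phi>. finite (range \<phi>) \<and> (\<forall>r. \<phi> -` {r} \<in> \<Sigma>)}"

definition mix :: "real \<Rightarrow> ('s \<Rightarrow> 'x::real_vector) \<Rightarrow> ('s \<Rightarrow> 'x) \<Rightarrow> ('s \<Rightarrow> 'x)" where
  "mix \<alpha> f g = (\<lambda>s. \<alpha> *\<^sub>R f s + (1 - \<alpha>) *\<^sub>R g s)"

definition cst :: "'x \<Rightarrow> ('s \<Rightarrow> 'x)" where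
  "cst x = (\<lambda>_. x)"

definition incomp :: "('a \<Rightarrow> 'a \<Rightarrow> bool) \<Rightarrow> 'a \<Rightarrow> 'a \<Rightarrow> bool" where
  "incomp P f g \<longleftrightarrow> \<not> P f g \<and> \<not> P g f"

definition A1 :: "'s set set \<Rightarrow> 'x::real_vector set \<Rightarrow> (('s \<Rightarrow> 'x) \<Rightarrow> ('s \<Rightarrow> 'x) \<Rightarrow> bool) \<Rightarrow> bool" where
  "A1 \<Sigma> X P \<longleftrightarrow>
     (\<forall>f\<in>acts \<Sigma> X. \<forall>g\<in>acts \<Sigma> X. P f g \<longrightarrow> \<not> P g f) \<and>
     (\<forall>f\<in>acts \<Sigma> X. \<forall>g\<in>acts \<Sigma> X. \<forall>h\<in>acts \<Sigma> X. P f g \<and> P g h \<longrightarrow> P f h) \<and>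
     (\<exists>x\<in>X. \<exists>y\<in>X. P (cst x) (cst y)) \<and>
     (\<forall>x\<in>X. \<forall>y\<in>X. \<forall>z\<in>X. \<not> P (cst x) (cst y) \<and> \<not> P (cst y) (cst z) \<longrightarrow> \<not> P (cst x) (cst z))"

definition A2 :: "'s set set \<Rightarrow> 'x::real_vector set \<Rightarrow> (('s \<Rightarrow> 'x) \<Rightarrow> ('s \<Rightarrow> 'x) \<Rightarrow> bool) \<Rightarrow> bool" where
  "A2 \<Sigma> X P \<longleftrightarrow>
     (\<forall>f\<in>acts \<Sigma> X. \<forall>g\<in>acts \<Sigma> X. \<forall>h\<in>acts \<Sigma> X.
        openin (top_of_set {0..1}) {\<alpha>\<in>{0..1::real}. P (mix \<alpha> f g) h} \<and>
        openin (top_of_set {0..1}) {\<alpha>\<in>{0..1::real}. P h (mix \<alpha> f g)})"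

definition A3 :: "'s set set \<Rightarrow> 'x::real_vector set \<Rightarrow> (('s \<Rightarrow> 'x) \<Rightarrow> ('s \<Rightarrow> 'x) \<Rightarrow> bool) \<Rightarrow> bool" where
  "A3 \<Sigma> X P \<longleftrightarrow>
     (\<forall>f\<in>acts \<Sigma> X. \<forall>g\<in>acts \<Sigma> X. \<forall>x\<in>X. \<forall>\<alpha>\<in>{0<..<1::real}.
        P f g \<longleftrightarrow> P (mix \<alpha> f (cst x)) (mix \<alpha> g (cst x)))"

definition A5 :: "'s set set \<Rightarrow> 'x::real_vector set \<Rightarrow> (('s \<Rightarrow> 'x) \<Rightarrow> ('s \<Rightarrow> 'x) \<Rightarrow> bool) \<Rightarrow> bool" where
  "A5 \<Sigma> X P \<longleftrightarrow>
     (\<forall>f\<in>acts \<Sigma> X. \<forall>g\<in>acts \<Sigma> X. (\<forall>s. P (cst (f s)) (cst (g s))) \<longrightarrow> P f g)"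

definition A6 :: "'s set set \<Rightarrow> 'x::real_vector set \<Rightarrow> (('s \<Rightarrow> 'x) \<Rightarrow> ('s \<Rightarrow> 'x) \<Rightarrow> bool) \<Rightarrow> bool" where
  "A6 \<Sigma> X P \<longleftrightarrow>
     (\<forall>f\<in>acts \<Sigma> X. \<forall>g\<in>acts \<Sigma> X.
        (\<forall>x\<in>X. incomp P f (cst x) \<longrightarrow> incomp P g (cst x)) \<longrightarrow> incomp P f g)"

definition A7 :: "'s set set \<Rightarrow> 'x::real_vector set \<Rightarrow> (('s \<Rightarrow> 'x) \<Rightarrow> ('s \<Rightarrow> 'x) \<Rightarrow> bool) \<Rightarrow> bool" where
  "A7 \<Sigma> X P \<longleftrightarrow>
     (\<forall>f\<in>acts \<Sigma> X. \<forall>g\<in>acts \<Sigma> X. \<forall>x\<in>X. \<forall>y\<in>X.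
        incomp P f (cst x) \<and> P (cst x) g \<and> incomp P g (cst y) \<and> P f (cst y) \<longrightarrow> P f g)"

definition affine_on :: "'x::real_vector set \<Rightarrow> ('x \<Rightarrow> real) \<Rightarrow> bool" where
  "affine_on X u \<longleftrightarrow>
     (\<forall>x\<in>X. \<forall>y\<in>X. \<forall>\<alpha>\<in>{0..1::real}.
        u (\<alpha> *\<^sub>R x + (1 - \<alpha>) *\<^sub>R y) = \<alpha> * u x + (1 - \<alpha>) * u y)"

definition constant_linear :: "'s set set \<Rightarrow> (('s \<Rightarrow> real) \<Rightarrow> real) \<Rightarrow> bool" where
  "constant_linear \<Sigma> I \<longleftrightarrow>
     (\<forall>\<phi>\<in>B0 \<Sigma>. \<forall>a\<ge>0. \<forall>b. I (\<lambda>s. a * \<phi> s + b) = a * I \<phi> + b)"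

definition monotonic :: "'s set set \<Rightarrow> (('s \<Rightarrow> real) \<Rightarrow> real) \<Rightarrow> bool" where
  "monotonic \<Sigma> I \<longleftrightarrow>
     (\<forall>\<phi>\<in>B0 \<Sigma>. \<forall>\<psi>\<in>B0 \<Sigma>. (\<forall>s. \<phi> s \<ge> \<psi> s) \<longrightarrow> I \<phi> \<ge> I \<psi>)"

definition represents :: "'s set set \<Rightarrow> 'x::real_vector set \<Rightarrow> (('s \<Rightarrow> 'x) \<Rightarrow> ('s \<Rightarrow> 'x) \<Rightarrow> bool)
    \<Rightarrow> ('x \<Rightarrow> real) \<Rightarrow> (('s \<Rightarrow> real) \<Rightarrow> real) \<Rightarrow> (('s \<Rightarrow> real) \<Rightarrow> real) \<Rightarrow> bool" where
  "represents \<Sigma> X P u Ip Io \<longleftrightarrow>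
     affine_on X u \<and> (\<exists>x\<in>X. \<exists>y\<in>X. u x \<noteq> u y) \<and>
     monotonic \<Sigma> Ip \<and> constant_linear \<Sigma> Ip \<and>
     monotonic \<Sigma> Io \<and> constant_linear \<Sigma> Io \<and>
     (\<forall>h\<in>acts \<Sigma> X. Ip (u \<circ> h) \<le> Io (u \<circ> h)) \<and>
     (\<forall>f\<in>acts \<Sigma> X. \<forall>g\<in>acts \<Sigma> X.
        P f g \<longleftrightarrow> Ip (u \<circ> f) > Ip (u \<circ> g) \<and> Io (u \<circ> f) > Io (u \<circ> g))"

end

theory Submission
  imports Defs
begin

lemma cst_acts: "algebra UNIV \<Sigma> \<Longrightarrow> x \<in> X \<Longrightarrow> cst x \<in> acts \<Sigma> X"
proof -
  assume alg: "algebra UNIV \<Sigma>" and x: "x \<in> X"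
  interpret algebra UNIV \<Sigma> by fact
  have "\<And>y. (\<lambda>_::'a. x) -` {y} = (if y = x then UNIV else {})" by auto
  then show ?thesis using x top unfolding acts_def cst_def by auto
qed

lemma mix_cst: "mix a (cst x) (cst y) = cst (a *\<^sub>R x + (1 - a) *\<^sub>R y)"
  by (simp add: mix_def cst_def)

lemma comp_meas:
  assumes alg: "algebra UNIV \<Sigma>" and fin: "finite (range f)" and pre: "\<forall>x. f -` {x} \<in> \<Sigma>"
  shows "finite (range (\<lambda>s. G (f s)))" and "(\<lambda>s. G (f s)) -` {y} \<in> \<Sigma>"
proof -
  interpret algebra UNIV \<Sigma> by fact
  have "range (\<lambda>s. G (f s)) = G ` range f" by auto
  then show "finite (range (\<lambda>s. G (f s)))" using fin by simp
  have "(\<lambda>s. G (f s)) -` {y} = (\<Union>x\<in>(range f \<inter> G -` {y}). f -` {x})" by auto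
  also have "\<dots> \<in> \<Sigma>" using fin pre by (intro finite_UN) auto
  finally show "(\<lambda>s. G (f s)) -` {y} \<in> \<Sigma>" .
qed

lemma comp_acts:
  assumes alg: "algebra UNIV \<Sigma>" and fin: "finite (range f)" and pre: "\<forall>x. f -` {x} \<in> \<Sigma>"
    and rng: "\<And>s. G (f s) \<in> X"
  shows "(\<lambda>s. G (f s)) \<in> acts \<Sigma> X"
  using comp_meas[OF alg fin pre] rng unfolding acts_def by auto

lemma comp_B0:
  assumes alg: "algebra UNIV \<Sigma>" and fin: "finite (range f)" and pre: "\<forall>x. f -` {x} \<in> \<Sigma>"
  shows "(\<lambda>s. G (f s)) \<in> B0 \<Sigma>"
  using comp_meas[OF alg fin pre] unfolding B0_def by auto

lemma acts_D: "f \<in> acts \<Sigma> X \<Longrightarrow> finite (range f) \<and> (\<forall>x. f -` {x} \<in> \<Sigma>) \<and> (\<forall>s. f s \<in> X)"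
  unfolding acts_def by auto

lemma B0_D: "\<phi> \<in> B0 \<Sigma> \<Longrightarrow> finite (range \<phi>) \<and> (\<forall>x. \<phi> -` {x} \<in> \<Sigma>)"
  unfolding B0_def by auto

lemma mix_acts:
  assumes alg: "algebra UNIV \<Sigma>" and cv: "convex X" and f: "f \<in> acts \<Sigma> X" and y: "y \<in> X"
    and a: "0 \<le> a" "a \<le> 1"
  shows "mix a f (cst y) \<in> acts \<Sigma> X"
proof -
  have "mix a f (cst y) = (\<lambda>s. (\<lambda>z. a *\<^sub>R z + (1 - a) *\<^sub>R y) (f s))" by (simp add: mix_def cst_def)
  also have "\<dots> \<in> acts \<Sigma> X"
    using acts_D[OF f] cv y a by (intro comp_acts[OF alg]) (auto simp: convex_def)
  finally show ?thesis .
qed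

lemma mix_acts2:
  assumes alg: "algebra UNIV \<Sigma>" and cv: "convex X" and f: "f \<in> acts \<Sigma> X" and g: "g \<in> acts \<Sigma> X"
    and a: "0 \<le> a" "a \<le> 1"
  shows "mix a f g \<in> acts \<Sigma> X"
proof -
  let ?h = "\<lambda>s. (f s, g s)"
  have fin: "finite (range ?h)"
    using acts_D[OF f] acts_D[OF g]
    by (rule_tac finite_subset[of _ "range f \<times> range g"]) auto
  interpret algebra UNIV \<Sigma> by fact
  have pre: "\<forall>x. ?h -` {x} \<in> \<Sigma>"
  proof
    fix x
    have "?h -` {x} = f -` {fst x} \<inter> g -` {snd x}" by (cases x) auto
    then show "?h -` {x} \<in> \<Sigma>" using acts_D[OF f] acts_D[OF g] by auto
  qed
  have "mix a f g = (\<lambda>s. (\<lambda>z. a *\<^sub>R fst z + (1 - a) *\<^sub>R snd z) (?h s))" by (simp add: mix_def)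
  also have "\<dots> \<in> acts \<Sigma> X"
    using acts_D[OF f] acts_D[OF g] cv a by (intro comp_acts[OF alg fin pre]) (auto simp: convex_def)
  finally show ?thesis .
qed

lemma open_near0:
  assumes "openin (top_of_set {0..1::real}) S" "0 \<in> S"
  shows "\<exists>e>0. \<forall>t. 0 \<le> t \<and> t < e \<longrightarrow> t \<in> S"
proof -
  from assms obtain e where e: "e > 0" "\<forall>x'\<in>{0..1}. dist x' 0 < e \<longrightarrow> x' \<in> S"
    unfolding openin_euclidean_subtopology_iff by blast
  show ?thesis
    by (rule exI[of _ "min e 1"]) (use e in \<open>auto simp: dist_real_def\<close>)
qed

lemma open_near1:
  assumes "openin (top_of_set {0..1::real}) S" "1 \<in> S"
  shows "\<exists>e>0. \<forall>t. 1 - e < t \<and> t \<le> 1 \<longrightarrow> t \<in> S"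
proof -
  from assms obtain e where e: "e > 0" "\<forall>x'\<in>{0..1}. dist x' 1 < e \<longrightarrow> x' \<in> S"
    unfolding openin_euclidean_subtopology_iff by blast
  show ?thesis
    by (rule exI[of _ "min e 1"]) (use e in \<open>auto simp: dist_real_def\<close>)
qed


locale vnm =
  fixes \<Sigma> :: "'s set set" and X :: "'x::real_vector set" and P :: "('s \<Rightarrow> 'x) \<Rightarrow> ('s \<Rightarrow> 'x) \<Rightarrow> bool"
    and x0 x1 :: 'x
  assumes alg: "algebra UNIV \<Sigma>" and cvx: "convex X"
    and a1: "A1 \<Sigma> X P" and a2: "A2 \<Sigma> X P" and a3: "A3 \<Sigma> X P"
    and x0X: "x0 \<in> X" and x1X: "x1 \<in> X" and x10: "P (cst x1) (cst x0)"
begin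

abbreviation R :: "'x \<Rightarrow> 'x \<Rightarrow> bool" where "R x y \<equiv> P (cst x) (cst y)"

lemma cstA: "x \<in> X \<Longrightarrow> cst x \<in> acts \<Sigma> X" using cst_acts[OF alg] .

lemma R_asym: "x \<in> X \<Longrightarrow> y \<in> X \<Longrightarrow> R x y \<Longrightarrow> \<not> R y x"
  using a1 cstA unfolding A1_def by blast

lemma R_trans: "x \<in> X \<Longrightarrow> y \<in> X \<Longrightarrow> z \<in> X \<Longrightarrow> R x y \<Longrightarrow> R y z \<Longrightarrow> R x z"
  using a1 cstA unfolding A1_def by blast

lemma R_negtrans: "x \<in> X \<Longrightarrow> y \<in> X \<Longrightarrow> z \<in> X \<Longrightarrow> \<not> R x y \<Longrightarrow> \<not> R y z \<Longrightarrow> \<not> R x z"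
  using a1 unfolding A1_def by blast

lemma cm: "a \<in> X \<Longrightarrow> b \<in> X \<Longrightarrow> 0 \<le> t \<Longrightarrow> t \<le> 1 \<Longrightarrow> t *\<^sub>R a + (1 - t) *\<^sub>R b \<in> X"
  using cvx unfolding convex_def by auto

lemma A3c: "x \<in> X \<Longrightarrow> y \<in> X \<Longrightarrow> z \<in> X \<Longrightarrow> 0 < t \<Longrightarrow> t < 1 \<Longrightarrow>
   R y z \<longleftrightarrow> R (t *\<^sub>R y + (1 - t) *\<^sub>R x) (t *\<^sub>R z + (1 - t) *\<^sub>R x)"
  using a3 cstA unfolding A3_def by (simp add: mix_cst)

lemma A2c1: "a \<in> X \<Longrightarrow> b \<in> X \<Longrightarrow> c \<in> X \<Longrightarrow>
   openin (top_of_set {0..1}) {t\<in>{0..1::real}. R (t *\<^sub>R a + (1 - t) *\<^sub>R b) c}"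
proof -
  assume X: "a \<in> X" "b \<in> X" "c \<in> X"
  have "openin (top_of_set {0..1}) {t\<in>{0..1::real}. P (mix t (cst a) (cst b)) (cst c)}"
    using a2 cstA[OF X(1)] cstA[OF X(2)] cstA[OF X(3)] unfolding A2_def by blast
  then show ?thesis by (simp add: mix_cst)
qed

lemma A2c2: "a \<in> X \<Longrightarrow> b \<in> X \<Longrightarrow> c \<in> X \<Longrightarrow>
   openin (top_of_set {0..1}) {t\<in>{0..1::real}. R c (t *\<^sub>R a + (1 - t) *\<^sub>R b)}"
proof -
  assume X: "a \<in> X" "b \<in> X" "c \<in> X"
  have "openin (top_of_set {0..1}) {t\<in>{0..1::real}. P (cst c) (mix t (cst a) (cst b))}"
    using a2 cstA[OF X(1)] cstA[OF X(2)] cstA[OF X(3)] unfolding A2_def by blast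
  then show ?thesis by (simp add: mix_cst)
qed

lemma near0:
  assumes X: "a \<in> X" "b \<in> X" "m \<in> X" "p \<in> X" "q \<in> X" and am: "R a m" and mb: "R m b"
  shows "\<exists>t. 0 < t \<and> t < 1 \<and> R (t *\<^sub>R p + (1 - t) *\<^sub>R a) (t *\<^sub>R q + (1 - t) *\<^sub>R b)"
proof -
  obtain e1 where e1: "e1 > 0" "\<forall>t. 0 \<le> t \<and> t < e1 \<longrightarrow> t \<in> {t\<in>{0..1::real}. R (t *\<^sub>R p + (1 - t) *\<^sub>R a) m}"
    using open_near0[OF A2c1[OF X(4) X(1) X(3)]] am by auto
  obtain e2 where e2: "e2 > 0" "\<forall>t. 0 \<le> t \<and> t < e2 \<longrightarrow> t \<in> {t\<in>{0..1::real}. R m (t *\<^sub>R q + (1 - t) *\<^sub>R b)}"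
    using open_near0[OF A2c2[OF X(5) X(2) X(3)]] mb by auto
  define t where "t = min (min e1 e2) (1/2) / 2"
  have t: "0 < t" "t < 1" "t < e1" "t < e2" using e1 e2 by (auto simp: t_def)
  then have "R (t *\<^sub>R p + (1 - t) *\<^sub>R a) m" "R m (t *\<^sub>R q + (1 - t) *\<^sub>R b)" using e1 e2 by auto
  then have "R (t *\<^sub>R p + (1 - t) *\<^sub>R a) (t *\<^sub>R q + (1 - t) *\<^sub>R b)"
    using R_trans cm X t by (meson less_eq_real_def)
  then show ?thesis using t by blast
qed

lemma shrink:
  assumes X: "a \<in> X" "b \<in> X" and t: "0 < t" "t \<le> 1"
  shows "R a b \<longleftrightarrow> R (t *\<^sub>R a + (1 - t) *\<^sub>R b) b"
proof (cases "t = 1")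
  case True then show ?thesis by simp
next
  case False
  then have "R a b \<longleftrightarrow> R (t *\<^sub>R a + (1 - t) *\<^sub>R b) (t *\<^sub>R b + (1 - t) *\<^sub>R b)"
    using A3c[OF X(2) X(1) X(2)] t by simp
  also have "t *\<^sub>R b + (1 - t) *\<^sub>R b = b" by (simp add: algebra_simps)
  finally show ?thesis .
qed

lemma shrink2:
  assumes X: "a \<in> X" "b \<in> X" and t: "0 < t" "t \<le> 1"
  shows "R a b \<longleftrightarrow> R a (t *\<^sub>R b + (1 - t) *\<^sub>R a)"
proof (cases "t = 1")
  case True then show ?thesis by simp
next
  case False
  then have "R a b \<longleftrightarrow> R (t *\<^sub>R a + (1 - t) *\<^sub>R a) (t *\<^sub>R b + (1 - t) *\<^sub>R a)"
    using A3c[OF X(1) X(1) X(2)] t by simp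
  also have "t *\<^sub>R a + (1 - t) *\<^sub>R a = a" by (simp add: algebra_simps)
  finally show ?thesis .
qed

lemma mid:
  assumes X: "a \<in> X" "b \<in> X" and ab: "R a b"
  shows "(1/2) *\<^sub>R a + (1/2) *\<^sub>R b \<in> X" "R a ((1/2) *\<^sub>R a + (1/2) *\<^sub>R b)" "R ((1/2) *\<^sub>R a + (1/2) *\<^sub>R b) b"
proof -
  show "(1/2) *\<^sub>R a + (1/2) *\<^sub>R b \<in> X" using cm[OF X, of "1/2"] by simp
  show "R a ((1/2) *\<^sub>R a + (1/2) *\<^sub>R b)" using shrink2[OF X, of "1/2"] ab by (simp add: add.commute)
  show "R ((1/2) *\<^sub>R a + (1/2) *\<^sub>R b) b" using shrink[OF X, of "1/2"] ab by simp
qed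

lemma diff_inv:
  assumes X: "a \<in> X" "b \<in> X" "c \<in> X" "d \<in> X" and eq: "a - b = c - d" and ab: "R a b"
  shows "R c d"
proof -
  have m: "(1/2) *\<^sub>R a + (1 - 1/2) *\<^sub>R d = (1/2) *\<^sub>R c + (1 - 1/2) *\<^sub>R b"
  proof -
    have "a + d = c + b" using eq by (simp add: algebra_simps)
    then have "(1/2) *\<^sub>R (a + d) = (1/2) *\<^sub>R (c + b)" by simp
    then show ?thesis by (simp add: scaleR_add_right)
  qed
  have "R ((1/2) *\<^sub>R a + (1 - 1/2) *\<^sub>R d) ((1/2) *\<^sub>R b + (1 - 1/2) *\<^sub>R d)"
    using A3c[OF X(4) X(1) X(2), of "1/2"] ab by simp
  then have "R ((1/2) *\<^sub>R c + (1 - 1/2) *\<^sub>R b) ((1/2) *\<^sub>R d + (1 - 1/2) *\<^sub>R b)"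
    using m by (simp add: add.commute)
  then show ?thesis using A3c[OF X(2) X(3) X(4), of "1/2"] by simp
qed

lemma consist:
  assumes X: "a \<in> X" "b \<in> X" "c \<in> X" "d \<in> X" and l: "l > 0" "m > 0"
    and eq: "l *\<^sub>R (a - b) = m *\<^sub>R (c - d)" and ab: "R a b"
  shows "R c d"
proof (cases "l \<le> m")
  case True
  define k where "k = l / m"
  have k: "0 < k" "k \<le> 1" using True l by (auto simp: k_def)
  have "c - d = k *\<^sub>R (a - b)"
  proof -
    have "(1/m) *\<^sub>R (l *\<^sub>R (a - b)) = (1/m) *\<^sub>R (m *\<^sub>R (c - d))" using eq by simp
    then show ?thesis using l by (simp add: k_def)
  qed
  then have e: "(k *\<^sub>R a + (1 - k) *\<^sub>R b) - b = c - d" by (simp add: algebra_simps)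
  have "R (k *\<^sub>R a + (1 - k) *\<^sub>R b) b" using shrink[OF X(1,2) k] ab by simp
  then show ?thesis using diff_inv[OF cm[OF X(1,2)] X(2,3,4) e] k by simp
next
  case False
  define k where "k = m / l"
  have k: "0 < k" "k \<le> 1" using False l by (auto simp: k_def)
  have "a - b = k *\<^sub>R (c - d)"
  proof -
    have "(1/l) *\<^sub>R (l *\<^sub>R (a - b)) = (1/l) *\<^sub>R (m *\<^sub>R (c - d))" using eq by simp
    then show ?thesis using l by (simp add: k_def)
  qed
  then have e: "a - b = (k *\<^sub>R c + (1 - k) *\<^sub>R d) - d" by (simp add: algebra_simps)
  have "R (k *\<^sub>R c + (1 - k) *\<^sub>R d) d" using diff_inv[OF X(1,2) cm[OF X(3,4)] X(4) e] k ab by simp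
  then show ?thesis using shrink[OF X(3,4) k] by simp
qed

definition D :: "'x \<Rightarrow> bool" where
  "D v \<longleftrightarrow> (\<exists>l>0. \<exists>a\<in>X. \<exists>b\<in>X. R a b \<and> v = l *\<^sub>R (a - b))"

definition V0 :: "'x set" where
  "V0 = {l *\<^sub>R (a - b) | l a b. l > 0 \<and> a \<in> X \<and> b \<in> X}"

lemma D_R: "x \<in> X \<Longrightarrow> y \<in> X \<Longrightarrow> D (x - y) \<longleftrightarrow> R x y"
proof
  assume "D (x - y)" "x \<in> X" "y \<in> X"
  then obtain l a b where "l > 0" "a \<in> X" "b \<in> X" "R a b" "x - y = l *\<^sub>R (a - b)"
    unfolding D_def by blast
  then show "R x y" using consist[of a b x y l 1] \<open>x \<in> X\<close> \<open>y \<in> X\<close> by simp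
next
  assume "R x y" "x \<in> X" "y \<in> X"
  then show "D (x - y)" unfolding D_def by (rule_tac exI[of _ 1]) auto
qed

lemma D_scale: "D v \<Longrightarrow> c > 0 \<Longrightarrow> D (c *\<^sub>R v)"
proof -
  assume "D v" "c > 0"
  then obtain l a b where "l > 0" "a \<in> X" "b \<in> X" "R a b" "v = l *\<^sub>R (a - b)" unfolding D_def by blast
  then show ?thesis unfolding D_def using \<open>c > 0\<close> by (intro exI[of _ "c * l"]) auto
qed

lemma D_scale_iff: "c > 0 \<Longrightarrow> D (c *\<^sub>R v) \<longleftrightarrow> D v"
  using D_scale[of "c *\<^sub>R v" "1/c"] D_scale[of v c] by auto

lemma D_add: assumes "D v" "D w" shows "D (v + w)"
proof -
  obtain l a b where ab: "l > 0" "a \<in> X" "b \<in> X" "R a b" "v = l *\<^sub>R (a - b)"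
    using assms(1) unfolding D_def by blast
  obtain m c d where cd: "m > 0" "c \<in> X" "d \<in> X" "R c d" "w = m *\<^sub>R (c - d)"
    using assms(2) unfolding D_def by blast
  define t where "t = l / (l + m)"
  have t: "0 < t" "t < 1" using ab cd by (auto simp: t_def)
  have X: "t *\<^sub>R a + (1 - t) *\<^sub>R c \<in> X" "t *\<^sub>R b + (1 - t) *\<^sub>R c \<in> X" "t *\<^sub>R b + (1 - t) *\<^sub>R d \<in> X"
    using cm t ab cd by auto
  have 1: "R (t *\<^sub>R a + (1 - t) *\<^sub>R c) (t *\<^sub>R b + (1 - t) *\<^sub>R c)"
    using A3c[OF cd(2) ab(2,3) t] ab by simp
  have "R ((1 - t) *\<^sub>R c + (1 - (1 - t)) *\<^sub>R b) ((1 - t) *\<^sub>R d + (1 - (1 - t)) *\<^sub>R b)"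
    using A3c[OF ab(3) cd(2,3), of "1 - t"] t cd by simp
  then have 2: "R (t *\<^sub>R b + (1 - t) *\<^sub>R c) (t *\<^sub>R b + (1 - t) *\<^sub>R d)" by (simp add: add.commute)
  have "R (t *\<^sub>R a + (1 - t) *\<^sub>R c) (t *\<^sub>R b + (1 - t) *\<^sub>R d)" using R_trans[OF X 1 2] .
  then have "D ((t *\<^sub>R a + (1 - t) *\<^sub>R c) - (t *\<^sub>R b + (1 - t) *\<^sub>R d))" using D_R X by blast
  then have "D ((l + m) *\<^sub>R ((t *\<^sub>R a + (1 - t) *\<^sub>R c) - (t *\<^sub>R b + (1 - t) *\<^sub>R d)))"
    using ab cd by (intro D_scale) auto
  moreover have "(l + m) *\<^sub>R ((t *\<^sub>R a + (1 - t) *\<^sub>R c) - (t *\<^sub>R b + (1 - t) *\<^sub>R d)) = v + w"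
  proof -
    have "(l + m) * t = l" "(l + m) * (1 - t) = m" using ab cd by (auto simp: t_def field_simps)
    have "(t *\<^sub>R a + (1 - t) *\<^sub>R c) - (t *\<^sub>R b + (1 - t) *\<^sub>R d) = t *\<^sub>R (a - b) + (1 - t) *\<^sub>R (c - d)"
      by (simp add: algebra_simps)
    then have "(l + m) *\<^sub>R ((t *\<^sub>R a + (1 - t) *\<^sub>R c) - (t *\<^sub>R b + (1 - t) *\<^sub>R d))
       = ((l + m) * t) *\<^sub>R (a - b) + ((l + m) * (1 - t)) *\<^sub>R (c - d)"
      by (simp add: scaleR_add_right)
    then show ?thesis using ab cd \<open>(l + m) * t = l\<close> \<open>(l + m) * (1 - t) = m\<close> by simp
  qed
  ultimately show ?thesis by simp
qed

lemma mixdiff: "(t *\<^sub>R a + (1 - t) *\<^sub>R c) - (t *\<^sub>R b + (1 - t) *\<^sub>R d) = t *\<^sub>R (a - b) + (1 - t) *\<^sub>R (c - (d::'x))"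
  by (simp add: algebra_simps)

lemma V0_I: "l > 0 \<Longrightarrow> a \<in> X \<Longrightarrow> b \<in> X \<Longrightarrow> l *\<^sub>R (a - b) \<in> V0"
  unfolding V0_def by blast

lemma V0_E: "v \<in> V0 \<Longrightarrow> (\<And>l a b. l > 0 \<Longrightarrow> a \<in> X \<Longrightarrow> b \<in> X \<Longrightarrow> v = l *\<^sub>R (a - b) \<Longrightarrow> thesis) \<Longrightarrow> thesis"
  unfolding V0_def by blast

lemma V0_diff: "a \<in> X \<Longrightarrow> b \<in> X \<Longrightarrow> a - b \<in> V0"
  using V0_I[of 1 a b] by simp

lemma D_V0: "D v \<Longrightarrow> v \<in> V0"
  unfolding D_def V0_def by blast

lemma V0_add: assumes "v \<in> V0" "w \<in> V0" shows "v + w \<in> V0"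
proof -
  obtain l a b where ab: "l > 0" "a \<in> X" "b \<in> X" "v = l *\<^sub>R (a - b)" using assms(1) by (rule V0_E)
  obtain m c d where cd: "m > 0" "c \<in> X" "d \<in> X" "w = m *\<^sub>R (c - d)" using assms(2) by (rule V0_E)
  define t where "t = l / (l + m)"
  have t: "0 < t" "t < 1" using ab cd by (auto simp: t_def)
  have tt: "(l + m) * t = l" "(l + m) * (1 - t) = m" using ab cd by (auto simp: t_def field_simps)
  have "(l + m) *\<^sub>R ((t *\<^sub>R a + (1 - t) *\<^sub>R c) - (t *\<^sub>R b + (1 - t) *\<^sub>R d)) = v + w"
    unfolding mixdiff using ab cd tt by (simp add: scaleR_add_right)
  moreover have "(l + m) *\<^sub>R ((t *\<^sub>R a + (1 - t) *\<^sub>R c) - (t *\<^sub>R b + (1 - t) *\<^sub>R d)) \<in> V0"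
    using ab cd t by (intro V0_I cm) auto
  ultimately show ?thesis by simp
qed

lemma V0_scale: assumes "v \<in> V0" shows "c *\<^sub>R v \<in> V0"
proof -
  obtain l a b where ab: "l > 0" "a \<in> X" "b \<in> X" "v = l *\<^sub>R (a - b)" using assms(1) by (rule V0_E)
  consider "c > 0" | "c = 0" | "c < 0" by linarith
  then show ?thesis
  proof cases
    case 1 then show ?thesis using ab V0_I[of "c * l" a b] by simp
  next
    case 2 then show ?thesis using V0_diff[OF x0X x0X] by simp
  next
    case 3
    have "c *\<^sub>R v = (c * l) *\<^sub>R (a - b)" using ab by simp
    also have "\<dots> = (- c * l) *\<^sub>R (b - a)" by (metis minus_diff_eq scaleR_minus_left scaleR_minus_right mult_minus_left)
    finally have eq: "c *\<^sub>R v = (- c * l) *\<^sub>R (b - a)" .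
    have "(- c * l) *\<^sub>R (b - a) \<in> V0" using 3 ab by (intro V0_I) (auto simp: mult_neg_pos)
    then show ?thesis by (simp only: eq)
  qed
qed

abbreviation e :: 'x where "e \<equiv> x1 - x0"

lemma V0_e: "e \<in> V0" using V0_diff[OF x1X x0X] .

lemma D_e: "D e" using D_R[OF x1X x0X] x10 by simp

lemma V0_lin: "v \<in> V0 \<Longrightarrow> v - t *\<^sub>R e \<in> V0"
  using V0_add[OF _ V0_scale[OF V0_e, of "- t"]] by simp

lemma D_not0: "\<not> D 0"
proof
  assume "D 0"
  then obtain l a b where "l > 0" "a \<in> X" "b \<in> X" "R a b" "0 = l *\<^sub>R (a - b)" unfolding D_def by blast
  then have "a = b" by simp
  then show False using R_asym[of a b] \<open>R a b\<close> \<open>a \<in> X\<close> by blast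
qed

lemma D_asym: "D v \<Longrightarrow> \<not> D (- v)"
  using D_add[of v "- v"] D_not0 by auto

lemma D_ce: "D (c *\<^sub>R e) \<Longrightarrow> c > 0"
proof (rule ccontr)
  assume d: "D (c *\<^sub>R e)" and "\<not> c > 0"
  then consider "c = 0" | "c < 0" by linarith
  then show False
  proof cases
    case 1 then show False using d D_not0 by simp
  next
    case 2
    have "D ((- 1 / c) *\<^sub>R (c *\<^sub>R e))" by (rule D_scale[OF d]) (use 2 in simp)
    moreover have "(- 1 / c) *\<^sub>R (c *\<^sub>R e) = - e" using 2 by simp
    ultimately have "D (- e)" by simp
    then show False using D_asym D_e by blast
  qed
qed

lemma D_split:
  assumes "v \<in> V0" "w \<in> V0" "D (v + w)" shows "D v \<or> D w"
proof -
  obtain l a b where ab: "l > 0" "a \<in> X" "b \<in> X" "v = l *\<^sub>R (a - b)" using assms(1) by (rule V0_E)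
  obtain m c d where cd: "m > 0" "c \<in> X" "d \<in> X" "w = m *\<^sub>R (c - d)" using assms(2) by (rule V0_E)
  define t where "t = l / (l + m)"
  have t: "0 < t" "t < 1" using ab cd by (auto simp: t_def)
  have tt: "(l + m) * t = l" "(l + m) * (1 - t) = m" using ab cd by (auto simp: t_def field_simps)
  define a2 where "a2 = t *\<^sub>R a + (1 - t) *\<^sub>R c"
  define b2 where "b2 = t *\<^sub>R b + (1 - t) *\<^sub>R d"
  define m2 where "m2 = t *\<^sub>R b + (1 - t) *\<^sub>R c"
  have X: "a2 \<in> X" "b2 \<in> X" "m2 \<in> X" using ab cd t cm by (auto simp: a2_def b2_def m2_def)
  have "(l + m) *\<^sub>R (a2 - b2) = v + w"
    unfolding a2_def b2_def mixdiff using ab cd tt by (simp add: scaleR_add_right)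
  then have "D ((l + m) *\<^sub>R (a2 - b2))" using assms(3) by simp
  then have "D (a2 - b2)" using D_scale_iff[of "l + m"] ab cd by simp
  then have "R a2 b2" using D_R X by blast
  then have "R a2 m2 \<or> R m2 b2" using R_negtrans[OF X(1) X(3) X(2)] by blast
  then show ?thesis
  proof
    assume "R a2 m2"
    then have "D (a2 - m2)" using D_R X by blast
    moreover have "a2 - m2 = (t / l) *\<^sub>R v"
    proof -
      have "a2 - m2 = t *\<^sub>R (a - b)" by (simp add: a2_def m2_def algebra_simps)
      moreover have "(t / l) *\<^sub>R v = t *\<^sub>R (a - b)" using ab by simp
      ultimately show ?thesis by simp
    qed
    ultimately have "D ((t / l) *\<^sub>R v)" by simp
    then show ?thesis using D_scale_iff[of "t / l" v] t ab by simp
  next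
    assume "R m2 b2"
    then have "D (m2 - b2)" using D_R X by blast
    moreover have "m2 - b2 = ((1 - t) / m) *\<^sub>R w"
    proof -
      have "m2 - b2 = (1 - t) *\<^sub>R (c - d)" by (simp add: b2_def m2_def algebra_simps)
      moreover have "((1 - t) / m) *\<^sub>R w = (1 - t) *\<^sub>R (c - d)" using cd by simp
      ultimately show ?thesis by simp
    qed
    ultimately have "D (((1 - t) / m) *\<^sub>R w)" by simp
    then show ?thesis using D_scale_iff[of "(1 - t) / m" w] t cd by simp
  qed
qed

lemma D_open: assumes "D v" shows "\<exists>ep>0. D (v - ep *\<^sub>R e)"
proof -
  obtain l a b where ab: "l > 0" "a \<in> X" "b \<in> X" "R a b" "v = l *\<^sub>R (a - b)"
    using assms unfolding D_def by blast
  note mm = mid[OF ab(2,3,4)]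
  obtain t where t: "0 < t" "t < 1" "R (t *\<^sub>R x0 + (1 - t) *\<^sub>R a) (t *\<^sub>R x1 + (1 - t) *\<^sub>R b)"
    using near0[OF ab(2,3) mm(1) x0X x1X mm(2,3)] by blast
  have X: "t *\<^sub>R x0 + (1 - t) *\<^sub>R a \<in> X" "t *\<^sub>R x1 + (1 - t) *\<^sub>R b \<in> X" using cm t ab x0X x1X by auto
  have "D ((t *\<^sub>R x0 + (1 - t) *\<^sub>R a) - (t *\<^sub>R x1 + (1 - t) *\<^sub>R b))" using D_R[OF X] t by simp
  then have "D ((l / (1 - t)) *\<^sub>R ((t *\<^sub>R x0 + (1 - t) *\<^sub>R a) - (t *\<^sub>R x1 + (1 - t) *\<^sub>R b)))"
    using t ab by (intro D_scale) auto
  moreover have "(l / (1 - t)) *\<^sub>R ((t *\<^sub>R x0 + (1 - t) *\<^sub>R a) - (t *\<^sub>R x1 + (1 - t) *\<^sub>R b))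
      = v - (l * t / (1 - t)) *\<^sub>R e"
  proof -
    have eq: "(t *\<^sub>R x0 + (1 - t) *\<^sub>R a) - (t *\<^sub>R x1 + (1 - t) *\<^sub>R b) = (1 - t) *\<^sub>R (a - b) - t *\<^sub>R e"
      by (simp add: algebra_simps)
    have e2: "(l / (1 - t)) *\<^sub>R ((1 - t) *\<^sub>R (a - b) - t *\<^sub>R e)
       = ((l / (1 - t)) * (1 - t)) *\<^sub>R (a - b) - ((l / (1 - t)) * t) *\<^sub>R e"
      by (simp only: scaleR_diff_right scaleR_scaleR)
    have e3: "(l / (1 - t)) * (1 - t) = l" using t by simp
    have e4: "(l / (1 - t)) * t = l * t / (1 - t)" by simp
    show ?thesis unfolding eq e2 e3 e4 ab(5) ..
  qed
  ultimately show ?thesis using t ab by (intro exI[of _ "l * t / (1 - t)"]) auto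
qed

lemma D_arch: assumes "v \<in> V0" shows "\<exists>s. D (v + s *\<^sub>R e)"
proof -
  obtain l a b where ab: "l > 0" "a \<in> X" "b \<in> X" "v = l *\<^sub>R (a - b)" using assms by (rule V0_E)
  note mm = mid[OF x1X x0X x10]
  obtain t where t: "0 < t" "t < 1" "R (t *\<^sub>R a + (1 - t) *\<^sub>R x1) (t *\<^sub>R b + (1 - t) *\<^sub>R x0)"
    using near0[OF x1X x0X mm(1) ab(2,3) mm(2,3)] by blast
  have X: "t *\<^sub>R a + (1 - t) *\<^sub>R x1 \<in> X" "t *\<^sub>R b + (1 - t) *\<^sub>R x0 \<in> X" using cm t ab x0X x1X by auto
  have "D ((t *\<^sub>R a + (1 - t) *\<^sub>R x1) - (t *\<^sub>R b + (1 - t) *\<^sub>R x0))" using D_R[OF X] t by simp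
  then have "D ((l / t) *\<^sub>R ((t *\<^sub>R a + (1 - t) *\<^sub>R x1) - (t *\<^sub>R b + (1 - t) *\<^sub>R x0)))"
    using t ab by (intro D_scale) auto
  moreover have "(l / t) *\<^sub>R ((t *\<^sub>R a + (1 - t) *\<^sub>R x1) - (t *\<^sub>R b + (1 - t) *\<^sub>R x0))
      = v + (l * (1 - t) / t) *\<^sub>R e"
  proof -
    have "(l / t) *\<^sub>R ((t *\<^sub>R a + (1 - t) *\<^sub>R x1) - (t *\<^sub>R b + (1 - t) *\<^sub>R x0))
       = ((l / t) * t) *\<^sub>R (a - b) + ((l / t) * (1 - t)) *\<^sub>R e"
      unfolding mixdiff by (simp add: scaleR_add_right)
    moreover have "(l / t) * t = l" using t by simp
    ultimately show ?thesis using ab by simp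
  qed
  ultimately have "D (v + (l * (1 - t) / t) *\<^sub>R e)" by simp
  then show ?thesis by blast
qed

definition L :: "'x \<Rightarrow> real" where "L v = Sup {t. D (v - t *\<^sub>R e)}"

lemma D_down: "D (v - t *\<^sub>R e) \<Longrightarrow> t' \<le> t \<Longrightarrow> D (v - t' *\<^sub>R e)"
proof (cases "t' = t")
  case False
  assume d: "D (v - t *\<^sub>R e)" "t' \<le> t"
  then have "D ((t - t') *\<^sub>R e)" using False D_scale[OF D_e, of "t - t'"] by simp
  from D_add[OF d(1) this] show ?thesis by (simp add: algebra_simps)
qed simp

lemma L_gt: assumes v: "v \<in> V0" shows "t < L v \<longleftrightarrow> D (v - t *\<^sub>R e)"
proof -
  obtain s where s: "D (v + s *\<^sub>R e)" using D_arch[OF v] by blast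
  obtain s' where s': "D (- v + s' *\<^sub>R e)" using D_arch[OF V0_scale[OF v, of "-1"]] by auto
  have "D (v - (- s) *\<^sub>R e)" using s by simp
  then have ne: "{t. D (v - t *\<^sub>R e)} \<noteq> {}" by blast
  have bd: "bdd_above {t. D (v - t *\<^sub>R e)}"
  proof (rule bdd_aboveI[of _ s'])
    fix t assume "t \<in> {t. D (v - t *\<^sub>R e)}"
    then have "D ((v - t *\<^sub>R e) + (- v + s' *\<^sub>R e))" using D_add s' by blast
    moreover have "(v - t *\<^sub>R e) + (- v + s' *\<^sub>R e) = (s' - t) *\<^sub>R e" by (simp add: algebra_simps)
    ultimately have "D ((s' - t) *\<^sub>R e)" by simp
    then show "t \<le> s'" using D_ce by fastforce
  qed
  show ?thesis
  proof
    assume "t < L v"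
    then obtain t' where "D (v - t' *\<^sub>R e)" "t < t'" unfolding L_def using less_cSup_iff[OF ne bd] by auto
    then show "D (v - t *\<^sub>R e)" using D_down by auto
  next
    assume "D (v - t *\<^sub>R e)"
    then obtain ep where "ep > 0" "D ((v - t *\<^sub>R e) - ep *\<^sub>R e)" using D_open by blast
    then have "D (v - (t + ep) *\<^sub>R e)" by (simp add: algebra_simps)
    then have "t + ep \<le> L v" unfolding L_def using cSup_upper[OF _ bd] by auto
    then show "t < L v" using \<open>ep > 0\<close> by simp
  qed
qed

lemma eq_by_less: "(\<And>t::real. t < a \<longleftrightarrow> t < b) \<Longrightarrow> a = b"
  by (metis less_irrefl linorder_neqE_linordered_idom)

lemma L_pos: "v \<in> V0 \<Longrightarrow> D v \<longleftrightarrow> 0 < L v"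
  using L_gt[of v 0] by simp

lemma L_zero: "L 0 = 0"
proof (rule eq_by_less)
  fix t :: real
  have "t < L 0 \<longleftrightarrow> D ((- t) *\<^sub>R e)" using L_gt[of 0 t] V0_diff[OF x0X x0X] by simp
  also have "\<dots> \<longleftrightarrow> t < 0" using D_ce[of "- t"] D_scale[OF D_e, of "- t"] by auto
  finally show "t < L 0 \<longleftrightarrow> t < 0" .
qed

lemma L_add: assumes v: "v \<in> V0" and w: "w \<in> V0" shows "L (v + w) = L v + L w"
proof (rule eq_by_less)
  fix t
  show "t < L (v + w) \<longleftrightarrow> t < L v + L w"
  proof
    assume "t < L (v + w)"
    then have d: "D ((v - L v *\<^sub>R e) + (w - (t - L v) *\<^sub>R e))"
      using L_gt[OF V0_add[OF v w]] by (simp add: algebra_simps)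
    show "t < L v + L w"
    proof (rule ccontr)
      assume "\<not> t < L v + L w"
      have "D (v - L v *\<^sub>R e) \<or> D (w - (t - L v) *\<^sub>R e)" using D_split[OF V0_lin[OF v] V0_lin[OF w] d] .
      then show False using L_gt[OF v, of "L v"] L_gt[OF w, of "t - L v"] \<open>\<not> t < L v + L w\<close> by auto
    qed
  next
    assume lt: "t < L v + L w"
    define d where "d = (L v + L w - t) / 2"
    have "L v - d < L v" "t - (L v - d) < L w" using lt by (auto simp: d_def field_simps)
    then have "D (v - (L v - d) *\<^sub>R e)" "D (w - (t - (L v - d)) *\<^sub>R e)" using L_gt v w by auto
    from D_add[OF this] have "D ((v + w) - t *\<^sub>R e)" by (simp add: algebra_simps)
    then show "t < L (v + w)" using L_gt[OF V0_add[OF v w]] by simp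
  qed
qed

lemma L_scale: assumes v: "v \<in> V0" and c: "c \<ge> 0" shows "L (c *\<^sub>R v) = c * L v"
proof (cases "c = 0")
  case True then show ?thesis using L_zero by simp
next
  case False
  then have c: "c > 0" using c by simp
  show ?thesis
  proof (rule eq_by_less)
    fix t
    have "t < L (c *\<^sub>R v) \<longleftrightarrow> D (c *\<^sub>R v - t *\<^sub>R e)" using L_gt[OF V0_scale[OF v]] by simp
    also have "c *\<^sub>R v - t *\<^sub>R e = c *\<^sub>R (v - (t / c) *\<^sub>R e)" using c by (simp add: algebra_simps)
    also have "D (c *\<^sub>R (v - (t / c) *\<^sub>R e)) \<longleftrightarrow> D (v - (t / c) *\<^sub>R e)" using D_scale_iff c by blast
    also have "\<dots> \<longleftrightarrow> t / c < L v" using L_gt[OF v] by simp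
    also have "\<dots> \<longleftrightarrow> t < c * L v" using c by (simp add: field_simps)
    finally show "t < L (c *\<^sub>R v) \<longleftrightarrow> t < c * L v" .
  qed
qed

definition U :: "'x \<Rightarrow> real" where "U x = L (x - x0)"

lemma U_affine: "affine_on X U"
  unfolding affine_on_def
proof (intro ballI)
  fix x y a assume xy: "x \<in> X" "y \<in> X" and a: "a \<in> {0..1::real}"
  have "a *\<^sub>R x + (1 - a) *\<^sub>R y - x0 = a *\<^sub>R (x - x0) + (1 - a) *\<^sub>R (y - x0)" by (simp add: algebra_simps)
  then have "U (a *\<^sub>R x + (1 - a) *\<^sub>R y) = L (a *\<^sub>R (x - x0) + (1 - a) *\<^sub>R (y - x0))" by (simp add: U_def)
  also have "\<dots> = a * U x + (1 - a) * U y"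
    using a xy x0X by (simp add: L_add V0_scale V0_diff L_scale U_def)
  finally show "U (a *\<^sub>R x + (1 - a) *\<^sub>R y) = a * U x + (1 - a) * U y" .
qed

lemma U_ord: "x \<in> X \<Longrightarrow> y \<in> X \<Longrightarrow> R x y \<longleftrightarrow> U y < U x"
proof -
  assume xy: "x \<in> X" "y \<in> X"
  have "R x y \<longleftrightarrow> 0 < L (x - y)" using D_R[OF xy] L_pos[OF V0_diff[OF xy]] by simp
  moreover have "U x = L (x - y) + U y"
    using L_add[OF V0_diff[OF xy] V0_diff[OF xy(2) x0X]] by (simp add: U_def)
  ultimately show ?thesis by simp
qed

lemma U_nc: "U x0 < U x1" using U_ord[OF x1X x0X] x10 by simp

end


lemma ivt_aff:
  assumes cv: "convex X" and ua: "affine_on X u" and a: "a \<in> X" and b: "b \<in> X"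
    and r: "u a \<le> r" "r \<le> u b"
  shows "\<exists>x\<in>X. u x = r"
proof (cases "u a = u b")
  case True then show ?thesis using a r by (intro bexI[of _ a]) auto
next
  case False
  then have ab: "u a < u b" using r by simp
  define t where "t = (r - u a) / (u b - u a)"
  have t: "0 \<le> t" "t \<le> 1" using ab r by (auto simp: t_def field_simps)
  have "t *\<^sub>R b + (1 - t) *\<^sub>R a \<in> X" using cv a b t unfolding convex_def by auto
  moreover have "u (t *\<^sub>R b + (1 - t) *\<^sub>R a) = t * u b + (1 - t) * u a"
    using ua a b t unfolding affine_on_def by auto
  moreover have "t * u b + (1 - t) * u a = r"
  proof -
    have h: "t * (u b - u a) = r - u a" using ab by (simp add: t_def)
    have "t * u b + (1 - t) * u a = u a + t * (u b - u a)" by (simp add: algebra_simps)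
    then show ?thesis using h by linarith
  qed
  ultimately show ?thesis by metis
qed

lemma affine_unique_aux:
  assumes cv: "convex X" and ua: "affine_on X u" and ua': "affine_on X u'"
    and ord: "\<forall>x\<in>X. \<forall>y\<in>X. u y < u x \<longleftrightarrow> u' y < u' x"
    and p: "p \<in> X" and q: "q \<in> X" and z: "z \<in> X" and pq: "u p < u q" and zz: "u p \<le> u z" "u z \<le> u q"
  shows "(u' z - u' p) * (u q - u p) = (u z - u p) * (u' q - u' p)"
proof -
  define t where "t = (u z - u p) / (u q - u p)"
  have t: "0 \<le> t" "t \<le> 1" using pq zz by (auto simp: t_def field_simps)
  define w where "w = t *\<^sub>R q + (1 - t) *\<^sub>R p"
  have w: "w \<in> X" using cv p q t unfolding convex_def w_def by auto
  have "u w = t * u q + (1 - t) * u p" using ua p q t unfolding affine_on_def w_def by auto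
  also have "\<dots> = u z"
  proof -
    have h: "t * (u q - u p) = u z - u p" using pq by (simp add: t_def)
    have "t * u q + (1 - t) * u p = u p + t * (u q - u p)" by (simp add: algebra_simps)
    then show ?thesis using h by linarith
  qed
  finally have "u w = u z" .
  then have "u' w = u' z" using ord w z by (metis linorder_neqE_linordered_idom less_irrefl)
  moreover have "u' w = t * u' q + (1 - t) * u' p" using ua' p q t unfolding affine_on_def w_def by auto
  ultimately have "u' z - u' p = t * (u' q - u' p)" by (simp add: algebra_simps)
  then show ?thesis using pq by (simp add: t_def field_simps)
qed

lemma affine_unique:
  assumes cv: "convex X" and ua: "affine_on X u" and ua': "affine_on X u'"
    and ord: "\<forall>x\<in>X. \<forall>y\<in>X. u y < u x \<longleftrightarrow> u' y < u' x"
    and nc: "\<exists>x\<in>X. \<exists>y\<in>X. u x \<noteq> u y"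
  shows "\<exists>a b. a > 0 \<and> (\<forall>x\<in>X. u' x = a * u x + b)"
proof -
  obtain x0 x1 where x: "x0 \<in> X" "x1 \<in> X" "u x0 < u x1"
    using nc by (metis linorder_neqE_linordered_idom)
  have x': "u' x0 < u' x1" using ord x by blast
  define a where "a = (u' x1 - u' x0) / (u x1 - u x0)"
  have a: "a > 0" using x x' by (simp add: a_def)
  note K = affine_unique_aux[OF cv ua ua' ord]
  have "\<forall>z\<in>X. u' z = a * u z + (u' x0 - a * u x0)"
  proof
    fix z assume z: "z \<in> X"
    have E: "(u' z - u' x0) * (u x1 - u x0) = (u z - u x0) * (u' x1 - u' x0)"
    proof -
      consider "u z < u x0" | "u x0 \<le> u z" "u z \<le> u x1" | "u x1 < u z" by linarith
      then show ?thesis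
      proof cases
        case 1
        have k: "(u' x0 - u' z) * (u x1 - u z) = (u x0 - u z) * (u' x1 - u' z)"
          using K[OF z x(2) x(1)] 1 x by simp
        then show ?thesis by (simp add: algebra_simps)
      next
        case 2
        show ?thesis using K[OF x(1) x(2) z] 2 x by simp
      next
        case 3
        have k: "(u' x1 - u' x0) * (u z - u x0) = (u x1 - u x0) * (u' z - u' x0)"
          using K[OF x(1) z x(2)] 3 x by simp
        then show ?thesis by (simp add: algebra_simps)
      qed
    qed
    have "u' z - u' x0 = (u z - u x0) * (u' x1 - u' x0) / (u x1 - u x0)"
      using E x by (simp add: eq_divide_eq)
    also have "\<dots> = a * (u z - u x0)" by (simp add: a_def)
    finally show "u' z = a * u z + (u' x0 - a * u x0)" by (simp add: algebra_simps)
  qed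
  then show ?thesis using a by blast
qed

lemma aux_lin: "(x::real) = y0 + A * (r - m) \<Longrightarrow> x = A * r + (y0 - A * m)"
  by (simp add: algebra_simps)

lemma embed:
  assumes alg: "algebra UNIV \<Sigma>" and cv: "convex X" and ua: "affine_on X u"
    and y: "y0 \<in> X" "y1 \<in> X" "u y0 < u y1"
    and fin: "finite (range \<phi>)" and pre: "\<forall>r. \<phi> -` {r} \<in> \<Sigma>"
    and bnd: "\<forall>s. m \<le> \<phi> s \<and> \<phi> s \<le> M"
  shows "\<exists>f\<in>acts \<Sigma> X. \<forall>s. u (f s) = ((u y1 - u y0) / (M - m + 1)) * \<phi> s + (u y0 - ((u y1 - u y0) / (M - m + 1)) * m)"
proof -
  have mM: "m \<le> M" using bnd by (meson order_trans)
  define c where "c = M - m + 1"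
  have c: "c > 0" using mM by (simp add: c_def)
  define G where "G r = ((r - m) / c) *\<^sub>R y1 + (1 - (r - m) / c) *\<^sub>R y0" for r
  have t: "0 \<le> (\<phi> s - m) / c" "(\<phi> s - m) / c \<le> 1" for s
    using bnd[rule_format, of s] c by (auto simp: c_def field_simps)
  have GX: "G (\<phi> s) \<in> X" for s using cv y t[of s] unfolding convex_def G_def by auto
  have f: "(\<lambda>s. G (\<phi> s)) \<in> acts \<Sigma> X" using comp_acts[OF alg fin pre] GX by blast
  have "u (G (\<phi> s)) = ((u y1 - u y0) / (M - m + 1)) * \<phi> s + (u y0 - ((u y1 - u y0) / (M - m + 1)) * m)" for s
  proof -
    have "u (G (\<phi> s)) = ((\<phi> s - m) / c) * u y1 + (1 - (\<phi> s - m) / c) * u y0"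
      using ua y t[of s] unfolding affine_on_def G_def by auto
    also have "\<dots> = u y0 + ((u y1 - u y0) / c) * (\<phi> s - m)" using c by (simp add: field_simps)
    also have "((u y1 - u y0) / c) = ((u y1 - u y0) / (M - m + 1))" by (simp add: c_def)
    finally show ?thesis by (rule aux_lin)
  qed
  then show ?thesis using f by (intro bexI[of _ "\<lambda>s. G (\<phi> s)"]) auto
qed


locale rep =
  fixes \<Sigma> :: "'s set set" and X :: "'x::real_vector set" and P :: "('s \<Rightarrow> 'x) \<Rightarrow> ('s \<Rightarrow> 'x) \<Rightarrow> bool"
    and u :: "'x \<Rightarrow> real"
  assumes alg: "algebra UNIV \<Sigma>" and cvx: "convex X"
    and a1: "A1 \<Sigma> X P" and a2: "A2 \<Sigma> X P" and a3: "A3 \<Sigma> X P" and a5: "A5 \<Sigma> X P"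
    and a6: "A6 \<Sigma> X P" and a7: "A7 \<Sigma> X P"
    and uaff: "affine_on X u" and uord: "\<And>x y. x \<in> X \<Longrightarrow> y \<in> X \<Longrightarrow> P (cst x) (cst y) \<longleftrightarrow> u y < u x"
    and unc: "\<exists>x\<in>X. \<exists>y\<in>X. u x < u y"
begin

lemma cstA: "x \<in> X \<Longrightarrow> cst x \<in> acts \<Sigma> X" using cst_acts[OF alg] .

lemma actX: "f \<in> acts \<Sigma> X \<Longrightarrow> f s \<in> X" unfolding acts_def by auto

lemma P_asym: "f \<in> acts \<Sigma> X \<Longrightarrow> g \<in> acts \<Sigma> X \<Longrightarrow> P f g \<Longrightarrow> \<not> P g f"
  using a1 unfolding A1_def by blast

lemma P_trans: "f \<in> acts \<Sigma> X \<Longrightarrow> g \<in> acts \<Sigma> X \<Longrightarrow> h \<in> acts \<Sigma> X \<Longrightarrow> P f g \<Longrightarrow> P g h \<Longrightarrow> P f h"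
  using a1 unfolding A1_def by blast

lemma A5': "f \<in> acts \<Sigma> X \<Longrightarrow> g \<in> acts \<Sigma> X \<Longrightarrow> (\<And>s. u (g s) < u (f s)) \<Longrightarrow> P f g"
  using a5 uord actX unfolding A5_def by blast

lemma ufin: "f \<in> acts \<Sigma> X \<Longrightarrow> finite (range (\<lambda>s. u (f s)))"
  using comp_meas(1)[OF alg, of f u] unfolding acts_def by auto

definition mn :: "('s \<Rightarrow> 'x) \<Rightarrow> real" where "mn f = Min (range (\<lambda>s. u (f s)))"
definition mx :: "('s \<Rightarrow> 'x) \<Rightarrow> real" where "mx f = Max (range (\<lambda>s. u (f s)))"

lemma mn_le: "f \<in> acts \<Sigma> X \<Longrightarrow> mn f \<le> u (f s)"
  unfolding mn_def using ufin by (intro Min_le) auto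
lemma mx_ge: "f \<in> acts \<Sigma> X \<Longrightarrow> u (f s) \<le> mx f"
  unfolding mx_def using ufin by (intro Max_ge) auto
lemma mn_ex: "f \<in> acts \<Sigma> X \<Longrightarrow> \<exists>s. mn f = u (f s)"
proof -
  assume f: "f \<in> acts \<Sigma> X"
  have "mn f \<in> range (\<lambda>s. u (f s))" unfolding mn_def using ufin[OF f] by (intro Min_in) auto
  then show ?thesis by auto
qed
lemma mx_ex: "f \<in> acts \<Sigma> X \<Longrightarrow> \<exists>s. mx f = u (f s)"
proof -
  assume f: "f \<in> acts \<Sigma> X"
  have "mx f \<in> range (\<lambda>s. u (f s))" unfolding mx_def using ufin[OF f] by (intro Max_in) auto
  then show ?thesis by auto
qed
lemma mn_mx: "f \<in> acts \<Sigma> X \<Longrightarrow> mn f \<le> mx f"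
  using mn_le mx_ge by (meson order_trans)

lemma ivt: "f \<in> acts \<Sigma> X \<Longrightarrow> mn f \<le> r \<Longrightarrow> r \<le> mx f \<Longrightarrow> \<exists>x\<in>X. u x = r"
proof -
  assume f: "f \<in> acts \<Sigma> X" and r: "mn f \<le> r" "r \<le> mx f"
  obtain s1 s2 where "mn f = u (f s1)" "mx f = u (f s2)" using mn_ex[OF f] mx_ex[OF f] by blast
  then show ?thesis using ivt_aff[OF cvx uaff actX[OF f] actX[OF f]] r by metis
qed

lemma u_mix: "f \<in> acts \<Sigma> X \<Longrightarrow> y \<in> X \<Longrightarrow> 0 \<le> a \<Longrightarrow> a \<le> 1 \<Longrightarrow>
  u (mix a f (cst y) s) = a * u (f s) + (1 - a) * u y"
  using uaff actX unfolding affine_on_def mix_def cst_def by auto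

lemma mixA: "f \<in> acts \<Sigma> X \<Longrightarrow> y \<in> X \<Longrightarrow> 0 \<le> a \<Longrightarrow> a \<le> 1 \<Longrightarrow> mix a f (cst y) \<in> acts \<Sigma> X"
  using mix_acts[OF alg cvx] by blast

lemma u_cmix: "x \<in> X \<Longrightarrow> y \<in> X \<Longrightarrow> 0 \<le> a \<Longrightarrow> a \<le> 1 \<Longrightarrow> u (a *\<^sub>R x + (1 - a) *\<^sub>R y) = a * u x + (1 - a) * u y"
  using uaff unfolding affine_on_def by auto

lemma cmixX: "x \<in> X \<Longrightarrow> y \<in> X \<Longrightarrow> 0 \<le> a \<Longrightarrow> a \<le> 1 \<Longrightarrow> a *\<^sub>R x + (1 - a) *\<^sub>R y \<in> X"
  using cvx unfolding convex_def by auto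

lemma A2a: "f \<in> acts \<Sigma> X \<Longrightarrow> x \<in> X \<Longrightarrow> z \<in> X \<Longrightarrow>
   openin (top_of_set {0..1}) {t\<in>{0..1::real}. P f (cst (t *\<^sub>R x + (1 - t) *\<^sub>R z))}"
proof -
  assume X: "f \<in> acts \<Sigma> X" "x \<in> X" "z \<in> X"
  have "openin (top_of_set {0..1}) {t\<in>{0..1::real}. P f (mix t (cst x) (cst z))}"
    using a2 X(1) cstA[OF X(2)] cstA[OF X(3)] unfolding A2_def by blast
  then show ?thesis by (simp add: mix_cst)
qed

lemma A2b: "f \<in> acts \<Sigma> X \<Longrightarrow> x \<in> X \<Longrightarrow> z \<in> X \<Longrightarrow>
   openin (top_of_set {0..1}) {t\<in>{0..1::real}. P (cst (t *\<^sub>R x + (1 - t) *\<^sub>R z)) f}"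
proof -
  assume X: "f \<in> acts \<Sigma> X" "x \<in> X" "z \<in> X"
  have "openin (top_of_set {0..1}) {t\<in>{0..1::real}. P (mix t (cst x) (cst z)) f}"
    using a2 X(1) cstA[OF X(2)] cstA[OF X(3)] unfolding A2_def by blast
  then show ?thesis by (simp add: mix_cst)
qed

lemma up_open:
  assumes f: "f \<in> acts \<Sigma> X" and x: "x \<in> X" and z: "z \<in> X" and fx: "P f (cst x)" and xz: "u x < u z"
  shows "\<exists>w\<in>X. u x < u w \<and> P f (cst w)"
proof -
  obtain ep where ep: "ep > 0" "\<forall>t. 1 - ep < t \<and> t \<le> 1 \<longrightarrow> t \<in> {t\<in>{0..1::real}. P f (cst (t *\<^sub>R x + (1 - t) *\<^sub>R z))}"
    using open_near1[OF A2a[OF f x z]] fx by auto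
  define t where "t = max (1/2) (1 - ep/2)"
  have t: "1 - ep < t" "t < 1" "0 \<le> t" using ep by (auto simp: t_def)
  then have "P f (cst (t *\<^sub>R x + (1 - t) *\<^sub>R z))" using ep by auto
  moreover have "u x < u (t *\<^sub>R x + (1 - t) *\<^sub>R z)"
  proof -
    have "u (t *\<^sub>R x + (1 - t) *\<^sub>R z) = u x + (1 - t) * (u z - u x)" using u_cmix[OF x z] t by (simp add: algebra_simps)
    moreover have "(1 - t) * (u z - u x) > 0" using t xz by simp
    ultimately show ?thesis by simp
  qed
  ultimately show ?thesis using cmixX[OF x z] t by auto
qed

lemma down_open:
  assumes f: "f \<in> acts \<Sigma> X" and x: "x \<in> X" and z: "z \<in> X" and fx: "P (cst x) f" and xz: "u z < u x"
  shows "\<exists>w\<in>X. u w < u x \<and> P (cst w) f"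
proof -
  obtain ep where ep: "ep > 0" "\<forall>t. 1 - ep < t \<and> t \<le> 1 \<longrightarrow> t \<in> {t\<in>{0..1::real}. P (cst (t *\<^sub>R x + (1 - t) *\<^sub>R z)) f}"
    using open_near1[OF A2b[OF f x z]] fx by auto
  define t where "t = max (1/2) (1 - ep/2)"
  have t: "1 - ep < t" "t < 1" "0 \<le> t" using ep by (auto simp: t_def)
  then have "P (cst (t *\<^sub>R x + (1 - t) *\<^sub>R z)) f" using ep by auto
  moreover have "u (t *\<^sub>R x + (1 - t) *\<^sub>R z) < u x"
  proof -
    have "u (t *\<^sub>R x + (1 - t) *\<^sub>R z) = u x - (1 - t) * (u x - u z)" using u_cmix[OF x z] t by (simp add: algebra_simps)
    moreover have "(1 - t) * (u x - u z) > 0" using t xz by simp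
    ultimately show ?thesis by simp
  qed
  ultimately show ?thesis using cmixX[OF x z] t by auto
qed

lemma C0:
  assumes f: "f \<in> acts \<Sigma> X" and x: "x \<in> X" and fx: "P f (cst x)" and m: "mx f \<le> u x"
    and z: "z \<in> X" "u x < u z"
  shows False
proof -
  obtain w where w: "w \<in> X" "u x < u w" "P f (cst w)" using up_open[OF f x z(1) fx z(2)] by blast
  have "u (f s) < u (cst w s)" for s
  proof -
    have "u (f s) \<le> mx f" by (rule mx_ge[OF f])
    then show ?thesis using m w(2) by (simp add: cst_def)
  qed
  then have "P (cst w) f" using A5'[OF cstA[OF w(1)] f] by blast
  then show False using P_asym[OF f cstA[OF w(1)]] w by blast
qed

lemma C0':
  assumes f: "f \<in> acts \<Sigma> X" and x: "x \<in> X" and fx: "P (cst x) f" and m: "u x \<le> mn f"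
    and z: "z \<in> X" "u z < u x"
  shows False
proof -
  obtain w where w: "w \<in> X" "u w < u x" "P (cst w) f" using down_open[OF f x z(1) fx z(2)] by blast
  have "u (cst w s) < u (f s)" for s
  proof -
    have "mn f \<le> u (f s)" by (rule mn_le[OF f])
    then show ?thesis using m w(2) by (simp add: cst_def)
  qed
  then have "P f (cst w)" using A5'[OF f cstA[OF w(1)]] by blast
  then show False using P_asym[OF f cstA[OF w(1)]] w by blast
qed

lemma A3a: "f \<in> acts \<Sigma> X \<Longrightarrow> g \<in> acts \<Sigma> X \<Longrightarrow> x \<in> X \<Longrightarrow> 0 < a \<Longrightarrow> a < 1 \<Longrightarrow>
  P f g \<longleftrightarrow> P (mix a f (cst x)) (mix a g (cst x))"
  using a3 unfolding A3_def by auto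

lemma C1:
  assumes f: "f \<in> acts \<Sigma> X" and x: "x \<in> X" and fx: "P f (cst x)"
  shows "u x < mx f"
proof (rule ccontr)
  assume "\<not> u x < mx f"
  then have m: "mx f \<le> u x" by simp
  show False
  proof (cases "\<exists>z\<in>X. u x < u z")
    case True then show False using C0[OF f x fx m] by blast
  next
    case False
    then have nz: "\<forall>z\<in>X. u z \<le> u x" by auto
    obtain y where y: "y \<in> X" "u y < u x" using unc nz by (meson less_le_trans)
    define f' where "f' = mix (1/2) f (cst y)"
    define x' where "x' = (1/2) *\<^sub>R x + (1 - 1/2) *\<^sub>R y"
    have f': "f' \<in> acts \<Sigma> X" using mixA[OF f y(1)] by (simp add: f'_def)
    have x': "x' \<in> X" using cmixX[OF x y(1), of "1/2"] by (simp add: x'_def)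
    have "P f' (mix (1/2) (cst x) (cst y))" using A3a[OF f cstA[OF x] y(1), of "1/2"] fx by (simp add: f'_def)
    then have fx': "P f' (cst x')" by (simp add: mix_cst x'_def)
    have ux': "u x' = (1/2) * u x + (1/2) * u y" using u_cmix[OF x y(1), of "1/2"] by (simp add: x'_def)
    have "mx f' \<le> u x'"
    proof -
      obtain s where s: "mx f' = u (f' s)" using mx_ex[OF f'] by blast
      have "u (f' s) = (1/2) * u (f s) + (1/2) * u y" using u_mix[OF f y(1), of "1/2"] by (simp add: f'_def)
      moreover have "u (f s) \<le> u x" using mx_ge[OF f, of s] m by simp
      ultimately show ?thesis using s ux' by simp
    qed
    moreover have "u x' < u x" using ux' y by simp
    ultimately show False using C0[OF f' x' fx' _ x] by blast
  qed
qed

lemma C1':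
  assumes f: "f \<in> acts \<Sigma> X" and x: "x \<in> X" and fx: "P (cst x) f"
  shows "mn f < u x"
proof (rule ccontr)
  assume "\<not> mn f < u x"
  then have m: "u x \<le> mn f" by simp
  show False
  proof (cases "\<exists>z\<in>X. u z < u x")
    case True then show False using C0'[OF f x fx m] by blast
  next
    case False
    then have nz: "\<forall>z\<in>X. u x \<le> u z" by auto
    obtain y where y: "y \<in> X" "u x < u y" using unc nz by (meson le_less_trans)
    define f' where "f' = mix (1/2) f (cst y)"
    define x' where "x' = (1/2) *\<^sub>R x + (1 - 1/2) *\<^sub>R y"
    have f': "f' \<in> acts \<Sigma> X" using mixA[OF f y(1)] by (simp add: f'_def)
    have x': "x' \<in> X" using cmixX[OF x y(1), of "1/2"] by (simp add: x'_def)
    have "P (mix (1/2) (cst x) (cst y)) f'" using A3a[OF cstA[OF x] f y(1), of "1/2"] fx by (simp add: f'_def)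
    then have fx': "P (cst x') f'" by (simp add: mix_cst x'_def)
    have ux': "u x' = (1/2) * u x + (1/2) * u y" using u_cmix[OF x y(1), of "1/2"] by (simp add: x'_def)
    have "u x' \<le> mn f'"
    proof -
      obtain s where s: "mn f' = u (f' s)" using mn_ex[OF f'] by blast
      have "u (f' s) = (1/2) * u (f s) + (1/2) * u y" using u_mix[OF f y(1), of "1/2"] by (simp add: f'_def)
      moreover have "u x \<le> u (f s)" using mn_le[OF f, of s] m by simp
      ultimately show ?thesis using s ux' by simp
    qed
    moreover have "u x < u x'" using ux' y by simp
    ultimately show False using C0'[OF f' x' fx' _ x] by blast
  qed
qed

definition pp :: "('s \<Rightarrow> 'x) \<Rightarrow> real" where
  "pp f = Sup (insert (mn f) {u x | x. x \<in> X \<and> P f (cst x)})"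
definition qq :: "('s \<Rightarrow> 'x) \<Rightarrow> real" where
  "qq f = Inf (insert (mx f) {u x | x. x \<in> X \<and> P (cst x) f})"

lemma pp_bdd: "f \<in> acts \<Sigma> X \<Longrightarrow> bdd_above (insert (mn f) {u x | x. x \<in> X \<and> P f (cst x)})"
  using C1 mn_mx by (intro bdd_aboveI[of _ "mx f"]) (auto intro: less_imp_le)

lemma qq_bdd: "f \<in> acts \<Sigma> X \<Longrightarrow> bdd_below (insert (mx f) {u x | x. x \<in> X \<and> P (cst x) f})"
  using C1' mn_mx by (intro bdd_belowI[of _ "mn f"]) (auto intro: less_imp_le)

lemma pp_bounds: "f \<in> acts \<Sigma> X \<Longrightarrow> mn f \<le> pp f \<and> pp f \<le> mx f"
proof -
  assume f: "f \<in> acts \<Sigma> X"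
  have "mn f \<le> pp f" unfolding pp_def using pp_bdd[OF f] by (intro cSup_upper) auto
  moreover have "pp f \<le> mx f" unfolding pp_def using C1[OF f] mn_mx[OF f]
    by (intro cSup_least) (auto intro: less_imp_le)
  ultimately show ?thesis by simp
qed

lemma qq_bounds: "f \<in> acts \<Sigma> X \<Longrightarrow> mn f \<le> qq f \<and> qq f \<le> mx f"
proof -
  assume f: "f \<in> acts \<Sigma> X"
  have "qq f \<le> mx f" unfolding qq_def using qq_bdd[OF f] by (intro cInf_lower) auto
  moreover have "mn f \<le> qq f" unfolding qq_def using C1'[OF f] mn_mx[OF f]
    by (intro cInf_greatest) (auto intro: less_imp_le)
  ultimately show ?thesis by simp
qed

lemma pp_char: assumes f: "f \<in> acts \<Sigma> X" and x: "x \<in> X" shows "P f (cst x) \<longleftrightarrow> u x < pp f"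
proof
  assume fx: "P f (cst x)"
  obtain s where s: "mx f = u (f s)" using mx_ex[OF f] by blast
  obtain w where w: "w \<in> X" "u x < u w" "P f (cst w)"
    using up_open[OF f x actX[OF f] fx] C1[OF f x fx] s by auto
  have "u w \<le> pp f" unfolding pp_def using pp_bdd[OF f] w by (intro cSup_upper) auto
  then show "u x < pp f" using w by simp
next
  assume "u x < pp f"
  then obtain r where r: "r \<in> insert (mn f) {u x | x. x \<in> X \<and> P f (cst x)}" "u x < r"
    unfolding pp_def using less_cSup_iff[OF _ pp_bdd[OF f]] by blast
  then consider "r = mn f" | y where "y \<in> X" "P f (cst y)" "r = u y" by blast
  then show "P f (cst x)"
  proof cases
    case 1
    have "u (cst x s) < u (f s)" for s using mn_le[OF f, of s] r 1 by (simp add: cst_def)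
    then show ?thesis using A5'[OF f cstA[OF x]] by blast
  next
    case 2
    then have "P (cst y) (cst x)" using uord[OF 2(1) x] r by simp
    then show ?thesis using P_trans[OF f cstA[OF 2(1)] cstA[OF x]] 2 by blast
  qed
qed

lemma qq_char: assumes f: "f \<in> acts \<Sigma> X" and x: "x \<in> X" shows "P (cst x) f \<longleftrightarrow> qq f < u x"
proof
  assume fx: "P (cst x) f"
  obtain s where s: "mn f = u (f s)" using mn_ex[OF f] by blast
  obtain w where w: "w \<in> X" "u w < u x" "P (cst w) f"
    using down_open[OF f x actX[OF f] fx] C1'[OF f x fx] s by auto
  have "qq f \<le> u w" unfolding qq_def using qq_bdd[OF f] w by (intro cInf_lower) auto
  then show "qq f < u x" using w by simp
next
  assume "qq f < u x"
  then obtain r where r: "r \<in> insert (mx f) {u x | x. x \<in> X \<and> P (cst x) f}" "r < u x"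
    unfolding qq_def using cInf_less_iff[OF _ qq_bdd[OF f]] by blast
  then consider "r = mx f" | y where "y \<in> X" "P (cst y) f" "r = u y" by blast
  then show "P (cst x) f"
  proof cases
    case 1
    have "u (f s) < u (cst x s)" for s using mx_ge[OF f, of s] r 1 by (simp add: cst_def)
    then show ?thesis using A5'[OF cstA[OF x] f] by blast
  next
    case 2
    then have "P (cst x) (cst y)" using uord[OF x 2(1)] r by simp
    then show ?thesis using P_trans[OF cstA[OF x] cstA[OF 2(1)] f] 2 by blast
  qed
qed

lemma pp_le_oo: assumes f: "f \<in> acts \<Sigma> X" shows "pp f \<le> qq f"
proof (rule ccontr)
  assume "\<not> pp f \<le> qq f"
  then have lt: "qq f < pp f" by simp
  obtain x where x: "x \<in> X" "u x = (qq f + pp f) / 2"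
    using ivt[OF f, of "(qq f + pp f) / 2"] pp_bounds[OF f] qq_bounds[OF f] lt by auto
  have "P f (cst x)" "P (cst x) f" using pp_char[OF f x(1)] qq_char[OF f x(1)] x(2) lt by auto
  then show False using P_asym[OF f cstA[OF x(1)]] by blast
qed

lemma incomp_char: "f \<in> acts \<Sigma> X \<Longrightarrow> x \<in> X \<Longrightarrow> incomp P f (cst x) \<longleftrightarrow> pp f \<le> u x \<and> u x \<le> qq f"
  unfolding incomp_def using pp_char qq_char by force

lemma dom:
  assumes f: "f \<in> acts \<Sigma> X" and g: "g \<in> acts \<Sigma> X" and lt: "pp g < pp f" "qq g < qq f"
  shows "P f g"
proof -
  obtain x where x: "x \<in> X" "u x = qq f" using ivt[OF f, of "qq f"] qq_bounds[OF f] by auto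
  obtain y where y: "y \<in> X" "u y = pp g" using ivt[OF g, of "pp g"] pp_bounds[OF g] by auto
  have "incomp P f (cst x)" using incomp_char[OF f x(1)] x pp_le_oo[OF f] by simp
  moreover have "P (cst x) g" using qq_char[OF g x(1)] x lt by simp
  moreover have "incomp P g (cst y)" using incomp_char[OF g y(1)] y pp_le_oo[OF g] by simp
  moreover have "P f (cst y)" using pp_char[OF f y(1)] y lt by simp
  ultimately show ?thesis using a7 f g x y unfolding A7_def by blast
qed

lemma P2: assumes f: "f \<in> acts \<Sigma> X" and g: "g \<in> acts \<Sigma> X"
  shows "P f g \<longleftrightarrow> pp g < pp f \<and> qq g < qq f"
proof
  assume fg: "P f g"
  have nfg: "\<not> incomp P f g" "\<not> incomp P g f" using fg unfolding incomp_def by auto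
  obtain x where x: "x \<in> X" "incomp P f (cst x)" "\<not> incomp P g (cst x)"
    using a6 f g nfg(1) unfolding A6_def by blast
  obtain y where y: "y \<in> X" "incomp P g (cst y)" "\<not> incomp P f (cst y)"
    using a6 f g nfg(2) unfolding A6_def by blast
  have 1: "pp f < pp g \<or> qq g < qq f" using x incomp_char[OF f x(1)] incomp_char[OF g x(1)] by auto
  have 2: "pp g < pp f \<or> qq f < qq g" using y incomp_char[OF f y(1)] incomp_char[OF g y(1)] by auto
  have 3: "\<not> (pp f < pp g \<and> qq f < qq g)" using dom[OF g f] P_asym[OF f g] fg by blast
  show "pp g < pp f \<and> qq g < qq f" using 1 2 3 by linarith
next
  assume "pp g < pp f \<and> qq g < qq f"
  then show "P f g" using dom[OF f g] by blast
qed

lemma fixpt1: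
  assumes a: "a > 0" and H: "\<And>x. x \<in> X \<Longrightarrow> (a * u x + c < A \<longleftrightarrow> u x < B)"
    and e1: "\<exists>x\<in>X. u x = B" and e2: "\<exists>x\<in>X. u x = (A - c) / a"
  shows "A = a * B + c"
proof -
  obtain x1 where x1: "x1 \<in> X" "u x1 = B" using e1 by blast
  obtain x2 where x2: "x2 \<in> X" "u x2 = (A - c) / a" using e2 by blast
  have "\<not> (a * B + c < A)" using H[OF x1(1)] x1(2) by simp
  moreover have "a * u x2 + c = A" using x2 a by simp
  then have "\<not> (u x2 < B)" using H[OF x2(1)] by simp
  then have "(A - c) / a \<ge> B" using x2 by simp
  then have "A - c \<ge> a * B" using a by (simp add: field_simps)
  ultimately show ?thesis by simp
qed

lemma fixpt2:
  assumes a: "a > 0" and H: "\<And>x. x \<in> X \<Longrightarrow> (A < a * u x + c \<longleftrightarrow> B < u x)"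
    and e1: "\<exists>x\<in>X. u x = B" and e2: "\<exists>x\<in>X. u x = (A - c) / a"
  shows "A = a * B + c"
proof -
  obtain x1 where x1: "x1 \<in> X" "u x1 = B" using e1 by blast
  obtain x2 where x2: "x2 \<in> X" "u x2 = (A - c) / a" using e2 by blast
  have "\<not> (A < a * B + c)" using H[OF x1(1)] x1(2) by simp
  moreover have "a * u x2 + c = A" using x2 a by simp
  then have "\<not> (B < u x2)" using H[OF x2(1)] by simp
  then have "(A - c) / a \<le> B" using x2 by simp
  then have "A - c \<le> a * B" using a by (simp add: field_simps)
  ultimately show ?thesis by simp
qed

lemma mix1: "mix 1 f g = f" by (simp add: mix_def)

lemma mix_range:
  assumes f: "f \<in> acts \<Sigma> X" and y: "y \<in> X" and a: "0 < a" "a \<le> 1"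
    and r: "mn (mix a f (cst y)) \<le> r" "r \<le> mx (mix a f (cst y))"
  shows "\<exists>x\<in>X. u x = (r - (1 - a) * u y) / a"
proof -
  let ?h = "mix a f (cst y)"
  have h: "?h \<in> acts \<Sigma> X" using mixA[OF f y] a by simp
  obtain s1 where s1: "mn ?h = u (?h s1)" using mn_ex[OF h] by blast
  obtain s2 where s2: "mx ?h = u (?h s2)" using mx_ex[OF h] by blast
  have "u (?h s1) = a * u (f s1) + (1 - a) * u y" "u (?h s2) = a * u (f s2) + (1 - a) * u y"
    using u_mix[OF f y] a by auto
  then have "a * mn f + (1 - a) * u y \<le> r" "r \<le> a * mx f + (1 - a) * u y"
    using s1 s2 r mn_le[OF f, of s1] mx_ge[OF f, of s2] a
    by (smt (verit, best) mult_left_mono)+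
  then have "mn f \<le> (r - (1 - a) * u y) / a" "(r - (1 - a) * u y) / a \<le> mx f"
    using a by (simp_all add: field_simps)
  then show ?thesis using ivt[OF f] by blast
qed

lemma P4:
  assumes f: "f \<in> acts \<Sigma> X" and y: "y \<in> X" and a: "0 < a" "a \<le> 1"
  shows "pp (mix a f (cst y)) = a * pp f + (1 - a) * u y \<and> qq (mix a f (cst y)) = a * qq f + (1 - a) * u y"
proof (cases "a = 1")
  case True then show ?thesis by (simp add: mix1)
next
  case False
  then have a1: "a < 1" using a by simp
  let ?h = "mix a f (cst y)"
  have h: "?h \<in> acts \<Sigma> X" using mixA[OF f y] a by simp
  have eq: "P f (cst x) \<longleftrightarrow> P ?h (cst (a *\<^sub>R x + (1 - a) *\<^sub>R y))"
    "P (cst x) f \<longleftrightarrow> P (cst (a *\<^sub>R x + (1 - a) *\<^sub>R y)) ?h" if x: "x \<in> X" for x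
    using A3a[OF f cstA[OF x] y a(1) a1] A3a[OF cstA[OF x] f y a(1) a1] by (simp_all add: mix_cst)
  have uu: "u (a *\<^sub>R x + (1 - a) *\<^sub>R y) = a * u x + (1 - a) * u y" if x: "x \<in> X" for x
    using u_cmix[OF x y] a by simp
  have "pp ?h = a * pp f + (1 - a) * u y"
  proof (rule fixpt1[OF a(1)])
    fix x assume x: "x \<in> X"
    show "a * u x + (1 - a) * u y < pp ?h \<longleftrightarrow> u x < pp f"
      using eq(1)[OF x] pp_char[OF f x] pp_char[OF h cmixX[OF x y]] uu[OF x] a by simp
  next
    show "\<exists>x\<in>X. u x = pp f" using ivt[OF f] pp_bounds[OF f] by blast
  next
    show "\<exists>x\<in>X. u x = (pp ?h - (1 - a) * u y) / a" using mix_range[OF f y a] pp_bounds[OF h] by blast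
  qed
  moreover have "qq ?h = a * qq f + (1 - a) * u y"
  proof (rule fixpt2[OF a(1)])
    fix x assume x: "x \<in> X"
    show "qq ?h < a * u x + (1 - a) * u y \<longleftrightarrow> qq f < u x"
      using eq(2)[OF x] qq_char[OF f x] qq_char[OF h cmixX[OF x y]] uu[OF x] a by simp
  next
    show "\<exists>x\<in>X. u x = qq f" using ivt[OF f] qq_bounds[OF f] by blast
  next
    show "\<exists>x\<in>X. u x = (qq ?h - (1 - a) * u y) / a" using mix_range[OF f y a] qq_bounds[OF h] by blast
  qed
  ultimately show ?thesis by simp
qed

lemma lim_aux:
  assumes H: "\<And>t. 0 < t \<Longrightarrow> t < 1 \<Longrightarrow> t * B + (1 - t) * c < (A::real)" and cB: "c < B"
  shows "B \<le> A"
proof (rule ccontr)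
  assume "\<not> B \<le> A"
  then have AB: "A < B" by simp
  define q where "q = (A - c) / (B - c)"
  define t where "t = (1 + max 0 q) / 2"
  have q: "q < 1" using AB cB by (simp add: field_simps q_def)
  have "q \<le> max 0 q" "0 \<le> max 0 q" "max 0 q < 1" using q by auto
  then have t: "0 < t" "t < 1" "(A - c) / (B - c) < t" unfolding t_def q_def[symmetric] by auto
  then have "A - c < t * (B - c)" using cB by (simp add: field_simps)
  then have "A < t * B + (1 - t) * c" by (simp add: algebra_simps)
  then show False using H[OF t(1,2)] by simp
qed

lemma mono_core:
  assumes f: "f \<in> acts \<Sigma> X" and g: "g \<in> acts \<Sigma> X" and le: "\<And>s. u (g s) \<le> u (f s)"
    and z: "z \<in> X" "\<And>s. u z < u (g s)"
  shows "pp g \<le> pp f \<and> qq g \<le> qq f"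
proof -
  have H: "t * pp g + (1 - t) * u z < pp f \<and> t * qq g + (1 - t) * u z < qq f" if t: "0 < t" "t < 1" for t
  proof -
    let ?g = "mix t g (cst z)"
    have g': "?g \<in> acts \<Sigma> X" using mixA[OF g z(1)] t by simp
    have "u (?g s) < u (f s)" for s
    proof -
      have "u (?g s) = t * u (g s) + (1 - t) * u z" using u_mix[OF g z(1)] t by simp
      also have "\<dots> < t * u (g s) + (1 - t) * u (g s)" using z(2)[of s] t by simp
      also have "\<dots> = u (g s)" by (simp add: algebra_simps)
      finally show ?thesis using le[of s] by simp
    qed
    then have "P f ?g" using A5'[OF f g'] by blast
    then show ?thesis using P2[OF f g'] P4[OF g z(1)] t by simp
  qed
  obtain s0 where "mn g = u (g s0)" using mn_ex[OF g] by blast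
  then have "u z < pp g" "u z < qq g" using z(2)[of s0] pp_bounds[OF g] qq_bounds[OF g] by auto
  then show ?thesis using lim_aux[of "pp g" "u z" "pp f"] lim_aux[of "qq g" "u z" "qq f"] H by blast
qed

lemma P5:
  assumes f: "f \<in> acts \<Sigma> X" and g: "g \<in> acts \<Sigma> X" and le: "\<And>s. u (g s) \<le> u (f s)"
  shows "pp g \<le> pp f \<and> qq g \<le> qq f"
proof -
  obtain c where c: "c \<in> X" "u c \<noteq> mn g" using unc by (metis less_irrefl)
  show ?thesis
  proof (cases "u c < mn g")
    case True
    show ?thesis using mono_core[OF f g le c(1)] True mn_le[OF g] by (meson less_le_trans)
  next
    case False
    then have cg: "mn g < u c" using c by simp
    obtain s0 where s0: "mn g = u (g s0)" using mn_ex[OF g] by blast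
    let ?f = "mix (1/2) f (cst c)" and ?g = "mix (1/2) g (cst c)"
    have f': "?f \<in> acts \<Sigma> X" and g': "?g \<in> acts \<Sigma> X" using mixA[OF f c(1)] mixA[OF g c(1)] by auto
    have uf: "u (?f s) = (1/2) * u (f s) + (1/2) * u c" and ug: "u (?g s) = (1/2) * u (g s) + (1/2) * u c" for s
      using u_mix[OF f c(1), of "1/2"] u_mix[OF g c(1), of "1/2"] by auto
    have le': "u (?g s) \<le> u (?f s)" for s using uf ug le[of s] by simp
    have z': "u (g s0) < u (?g s)" for s using ug[of s] mn_le[OF g, of s] s0 cg by simp
    have "pp ?g \<le> pp ?f \<and> qq ?g \<le> qq ?f" using mono_core[OF f' g' le' actX[OF g] z'] by blast
    then show ?thesis using P4[OF f c(1), of "1/2"] P4[OF g c(1), of "1/2"] by simp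
  qed
qed

lemma P3:
  assumes f: "f \<in> acts \<Sigma> X" and g: "g \<in> acts \<Sigma> X" and eq: "\<And>s. u (g s) = u (f s)"
  shows "pp g = pp f \<and> qq g = qq f"
  using P5[OF f g] P5[OF g f] eq by (simp add: order_antisym)

lemma Cons:
  assumes f: "f \<in> acts \<Sigma> X" and g: "g \<in> acts \<Sigma> X" and a: "a > 0" and eq: "\<And>s. u (g s) = a * u (f s) + b"
  shows "pp g = a * pp f + b \<and> qq g = a * qq f + b"
proof -
  define s0 :: 's where "s0 = undefined"
  define v where "v = u (f s0)"
  define w where "w = u (g s0)"
  have wv: "w = a * v + b" using eq by (simp add: v_def w_def)
  let ?F = "mix (a / (1 + a)) f (cst (g s0))" and ?G = "mix (1 / (1 + a)) g (cst (f s0))"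
  have al: "0 < a / (1 + a)" "a / (1 + a) \<le> 1" "0 < 1 / (1 + a)" "1 / (1 + a) \<le> 1" using a by auto
  have om: "1 - a / (1 + a) = 1 / (1 + a)" "1 - 1 / (1 + a) = a / (1 + a)" using a by (auto simp: field_simps)
  have F: "?F \<in> acts \<Sigma> X" and G: "?G \<in> acts \<Sigma> X"
    using mixA[OF f actX[OF g]] mixA[OF g actX[OF f]] al by auto
  have "u (?G s) = u (?F s)" for s
  proof -
    have "u (?F s) = (a / (1 + a)) * u (f s) + (1 / (1 + a)) * w"
      using u_mix[OF f actX[OF g, of s0], of "a / (1 + a)" s] al om by (simp add: w_def)
    moreover have "u (?G s) = (1 / (1 + a)) * u (g s) + (a / (1 + a)) * v"
      using u_mix[OF g actX[OF f, of s0], of "1 / (1 + a)" s] al om by (simp add: v_def)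
    ultimately show ?thesis using eq[of s] wv a by (simp add: field_simps)
  qed
  then have PF: "pp ?G = pp ?F \<and> qq ?G = qq ?F" using P3[OF F G] by blast
  have "pp ?F = (a / (1 + a)) * pp f + (1 / (1 + a)) * w" "qq ?F = (a / (1 + a)) * qq f + (1 / (1 + a)) * w"
    using P4[OF f actX[OF g, of s0], of "a / (1 + a)"] al om by (simp_all add: w_def)
  moreover have "pp ?G = (1 / (1 + a)) * pp g + (a / (1 + a)) * v" "qq ?G = (1 / (1 + a)) * qq g + (a / (1 + a)) * v"
    using P4[OF g actX[OF f, of s0], of "1 / (1 + a)"] al om by (simp_all add: v_def)
  ultimately have e1: "(1 / (1 + a)) * pp g + (a / (1 + a)) * v = (a / (1 + a)) * pp f + (1 / (1 + a)) * w"
    and e2: "(1 / (1 + a)) * qq g + (a / (1 + a)) * v = (a / (1 + a)) * qq f + (1 / (1 + a)) * w"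
    using PF by simp_all
  have k: "(1 + a) * ((1 / (1 + a)) * x + (a / (1 + a)) * y) = x + a * y" for x y
  proof -
    have nz: "1 + a \<noteq> 0" using a by simp
    have "(1 + a) * ((1 / (1 + a)) * x + (a / (1 + a)) * y) = ((1 + a) / (1 + a)) * x + ((1 + a) / (1 + a)) * (a * y)"
      by (simp only: distrib_left times_divide_eq_left times_divide_eq_right mult.assoc mult.left_commute)
    also have "\<dots> = x + a * y" using nz by simp
    finally show ?thesis .
  qed
  have "(1 + a) * ((1 / (1 + a)) * pp g + (a / (1 + a)) * v) = (1 + a) * ((a / (1 + a)) * pp f + (1 / (1 + a)) * w)"
    using e1 by (rule arg_cong)
  also have "(1 + a) * ((a / (1 + a)) * pp f + (1 / (1 + a)) * w) = (1 + a) * ((1 / (1 + a)) * w + (a / (1 + a)) * pp f)"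
    by (simp only: add.commute)
  finally have "pp g + a * v = w + a * pp f" by (simp only: k)
  have "(1 + a) * ((1 / (1 + a)) * qq g + (a / (1 + a)) * v) = (1 + a) * ((a / (1 + a)) * qq f + (1 / (1 + a)) * w)"
    using e2 by (rule arg_cong)
  also have "(1 + a) * ((a / (1 + a)) * qq f + (1 / (1 + a)) * w) = (1 + a) * ((1 / (1 + a)) * w + (a / (1 + a)) * qq f)"
    by (simp only: add.commute)
  finally have "qq g + a * v = w + a * qq f" by (simp only: k)
  moreover note \<open>pp g + a * v = w + a * pp f\<close>
  ultimately show ?thesis using wv by simp
qed

definition FCp :: "(('s \<Rightarrow> 'x) \<Rightarrow> real) \<Rightarrow> bool" where
  "FCp F \<longleftrightarrow> (\<forall>f g a b. f \<in> acts \<Sigma> X \<longrightarrow> g \<in> acts \<Sigma> X \<longrightarrow> a > 0 \<longrightarrow> (\<forall>s. u (g s) = a * u (f s) + b) \<longrightarrow> F g = a * F f + b)"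

definition Ifun :: "(('s \<Rightarrow> 'x) \<Rightarrow> real) \<Rightarrow> ('s \<Rightarrow> real) \<Rightarrow> real" where
  "Ifun F \<phi> = (SOME r. \<exists>a b f. a > 0 \<and> f \<in> acts \<Sigma> X \<and> (\<forall>s. u (f s) = a * \<phi> s + b) \<and> r = (F f - b) / a)"

lemma Ifun_eq:
  assumes FC: "FCp F"
    and a: "a > 0" and f: "f \<in> acts \<Sigma> X" and eq: "\<forall>s. u (f s) = a * \<phi> s + b"
  shows "Ifun F \<phi> = (F f - b) / a"
proof -
  have ex: "\<exists>r. \<exists>a b f. a > 0 \<and> f \<in> acts \<Sigma> X \<and> (\<forall>s. u (f s) = a * \<phi> s + b) \<and> r = (F f - b) / a"
    using a f eq by blast
  obtain a' b' f' where w: "a' > 0" "f' \<in> acts \<Sigma> X" "\<forall>s. u (f' s) = a' * \<phi> s + b'" "Ifun F \<phi> = (F f' - b') / a'"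
    using someI_ex[OF ex] unfolding Ifun_def by blast
  have ue: "u (f' s) = (a' / a) * u (f s) + (b' - a' * b / a)" for s
    using w(3) eq a by (simp add: field_simps)
  have "F f' = (a' / a) * F f + (b' - a' * b / a)"
  proof -
    have r: "\<And>f g a b. f \<in> acts \<Sigma> X \<Longrightarrow> g \<in> acts \<Sigma> X \<Longrightarrow> a > 0 \<Longrightarrow> (\<forall>s. u (g s) = a * u (f s) + b) \<Longrightarrow> F g = a * F f + b"
      using FC unfolding FCp_def by blast
    have aa: "a' / a > 0" using a w(1) by simp
    show ?thesis by (rule r[OF f w(2) aa]) (use ue in blast)
  qed
  then have "F f' - b' = (a' / a) * (F f - b)" by (simp add: algebra_simps)
  then show ?thesis using w(4) a w(1) by simp
qed

lemma exists_rep2: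
  assumes phi: "\<phi> \<in> B0 \<Sigma>" and psi: "\<psi> \<in> B0 \<Sigma>"
  shows "\<exists>a b f g. a > 0 \<and> f \<in> acts \<Sigma> X \<and> g \<in> acts \<Sigma> X \<and> (\<forall>s. u (f s) = a * \<phi> s + b) \<and> (\<forall>s. u (g s) = a * \<psi> s + b)"
proof -
  obtain y0 y1 where y: "y0 \<in> X" "y1 \<in> X" "u y0 < u y1" using unc by blast
  define m where "m = min (Min (range \<phi>)) (Min (range \<psi>))"
  define M where "M = max (Max (range \<phi>)) (Max (range \<psi>))"
  have fin: "finite (range \<phi>)" "finite (range \<psi>)" using phi psi unfolding B0_def by auto
  have bnd: "\<forall>s. m \<le> \<phi> s \<and> \<phi> s \<le> M" "\<forall>s. m \<le> \<psi> s \<and> \<psi> s \<le> M"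
    using fin unfolding m_def M_def by (auto intro: min.coboundedI1 min.coboundedI2 max.coboundedI1 max.coboundedI2)
  have mM: "m \<le> M" using bnd by (meson order_trans)
  define a where "a = (u y1 - u y0) / (M - m + 1)"
  have a: "a > 0" using y mM by (simp add: a_def)
  obtain f where f: "f \<in> acts \<Sigma> X" "\<forall>s. u (f s) = a * \<phi> s + (u y0 - a * m)"
    using embed[OF alg cvx uaff y, of \<phi> m M] phi bnd(1) unfolding B0_def a_def by blast
  obtain g where g: "g \<in> acts \<Sigma> X" "\<forall>s. u (g s) = a * \<psi> s + (u y0 - a * m)"
    using embed[OF alg cvx uaff y, of \<psi> m M] psi bnd(2) unfolding B0_def a_def by blast
  show ?thesis using a f g by blast
qed

lemma exists_rep: "\<phi> \<in> B0 \<Sigma> \<Longrightarrow> \<exists>a b f. a > 0 \<and> f \<in> acts \<Sigma> X \<and> (\<forall>s. u (f s) = a * \<phi> s + b)"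
  using exists_rep2[of \<phi> \<phi>] by blast

lemma const_B0: "(\<lambda>s. c) \<in> B0 \<Sigma>"
proof -
  interpret algebra UNIV \<Sigma> by (rule alg)
  have "(\<lambda>s::'s. c) -` {r} = (if r = c then UNIV else {})" for r by auto
  then show ?thesis unfolding B0_def using top by auto
qed

lemma Ifun_props:
  assumes FC: "FCp F"
    and FM: "\<forall>f\<in>acts \<Sigma> X. \<forall>g\<in>acts \<Sigma> X. (\<forall>s. u (g s) \<le> u (f s)) \<longrightarrow> F g \<le> F f"
    and FB: "\<forall>f\<in>acts \<Sigma> X. mn f \<le> F f \<and> F f \<le> mx f"
  shows "constant_linear \<Sigma> (Ifun F)" "monotonic \<Sigma> (Ifun F)"
    "\<And>f. f \<in> acts \<Sigma> X \<Longrightarrow> Ifun F (u \<circ> f) = F f"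
proof -
  note IE = Ifun_eq[OF FC]
  show "Ifun F (u \<circ> f) = F f" if f: "f \<in> acts \<Sigma> X" for f
    using IE[where a=1 and f=f and \<phi>="u \<circ> f" and b=0] f by simp
  show "constant_linear \<Sigma> (Ifun F)"
    unfolding constant_linear_def
  proof (intro ballI allI impI)
    fix \<phi> and a :: real and b assume phi: "\<phi> \<in> B0 \<Sigma>" and a: "0 \<le> a"
    show "Ifun F (\<lambda>s. a * \<phi> s + b) = a * Ifun F \<phi> + b"
    proof (cases "a = 0")
      case True
      obtain a' b' f where w: "a' > 0" "f \<in> acts \<Sigma> X" "\<forall>s. u (f s) = a' * b + b'"
        using exists_rep[OF const_B0[of b]] by blast
      have "mn f = a' * b + b'" "mx f = a' * b + b'" using mn_ex[OF w(2)] mx_ex[OF w(2)] w(3) by auto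
      then have "F f = a' * b + b'" using FB w(2) by (metis order_antisym)
      then have "Ifun F (\<lambda>s. b) = b" using IE[OF w(1,2), of "\<lambda>s. b" b'] w by simp
      then show ?thesis using True by simp
    next
      case False
      then have a: "a > 0" using a by simp
      obtain a' b' f where w: "a' > 0" "f \<in> acts \<Sigma> X" "\<forall>s. u (f s) = a' * \<phi> s + b'"
        using exists_rep[OF phi] by blast
      have 1: "Ifun F \<phi> = (F f - b') / a'" using IE[OF w] .
      have ue: "\<forall>s. u (f s) = (a' / a) * (a * \<phi> s + b) + (b' - a' * b / a)"
      proof
        fix s
        have "(a' / a) * (a * \<phi> s + b) = a' * \<phi> s + a' * b / a" using a by (simp add: field_simps)
        then show "u (f s) = (a' / a) * (a * \<phi> s + b) + (b' - a' * b / a)" using w(3) by simp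
      qed
      have aa: "a' / a > 0" using a w(1) by simp
      have 2: "Ifun F (\<lambda>s. a * \<phi> s + b) = (F f - (b' - a' * b / a)) / (a' / a)"
        by (rule IE[OF aa w(2) ue])
      have "(F f - (b' - a' * b / a)) / (a' / a) = a * ((F f - b') / a') + b"
        using a w(1) by (simp add: field_simps)
      then show ?thesis unfolding 1 2 .
    qed
  qed
  show "monotonic \<Sigma> (Ifun F)"
    unfolding monotonic_def
  proof (intro ballI impI)
    fix \<phi> \<psi> assume phi: "\<phi> \<in> B0 \<Sigma>" and psi: "\<psi> \<in> B0 \<Sigma>" and le: "\<forall>s. \<psi> s \<le> \<phi> s"
    obtain a b f g where w: "a > 0" "f \<in> acts \<Sigma> X" "g \<in> acts \<Sigma> X" "\<forall>s. u (f s) = a * \<phi> s + b" "\<forall>s. u (g s) = a * \<psi> s + b"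
      using exists_rep2[OF phi psi] by blast
    have "u (g s) \<le> u (f s)" for s using w le[rule_format, of s] by simp
    then have "F g \<le> F f" using FM w(2,3) by blast
    then show "Ifun F \<psi> \<le> Ifun F \<phi>" using IE[OF w(1,2,4)] IE[OF w(1,3,5)] w(1) by (simp add: divide_right_mono)
  qed
qed

theorem represents_rep: "represents \<Sigma> X P u (Ifun pp) (Ifun qq)"
proof -
  have cp: "FCp pp" "FCp qq" unfolding FCp_def using Cons by blast+
  have mp: "\<forall>f\<in>acts \<Sigma> X. \<forall>g\<in>acts \<Sigma> X. (\<forall>s. u (g s) \<le> u (f s)) \<longrightarrow> pp g \<le> pp f"
    using P5 by blast
  have mq: "\<forall>f\<in>acts \<Sigma> X. \<forall>g\<in>acts \<Sigma> X. (\<forall>s. u (g s) \<le> u (f s)) \<longrightarrow> qq g \<le> qq f"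
    using P5 by blast
  have bp: "\<forall>f\<in>acts \<Sigma> X. mn f \<le> pp f \<and> pp f \<le> mx f" using pp_bounds by blast
  have bq: "\<forall>f\<in>acts \<Sigma> X. mn f \<le> qq f \<and> qq f \<le> mx f" using qq_bounds by blast
  note Hp = Ifun_props[where F=pp, OF cp(1) mp bp]
  note Hq = Ifun_props[where F=qq, OF cp(2) mq bq]
  have nc: "\<exists>x\<in>X. \<exists>y\<in>X. u x \<noteq> u y" using unc by (metis less_irrefl)
  have le: "\<forall>h\<in>acts \<Sigma> X. Ifun pp (u \<circ> h) \<le> Ifun qq (u \<circ> h)"
  proof
    fix h assume h: "h \<in> acts \<Sigma> X"
    show "Ifun pp (u \<circ> h) \<le> Ifun qq (u \<circ> h)" unfolding Hp(3)[OF h] Hq(3)[OF h] by (rule pp_le_oo[OF h])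
  qed
  have pr: "\<forall>f\<in>acts \<Sigma> X. \<forall>g\<in>acts \<Sigma> X. P f g \<longleftrightarrow> Ifun pp (u \<circ> g) < Ifun pp (u \<circ> f) \<and> Ifun qq (u \<circ> g) < Ifun qq (u \<circ> f)"
  proof (intro ballI)
    fix f g assume f: "f \<in> acts \<Sigma> X" and g: "g \<in> acts \<Sigma> X"
    show "P f g \<longleftrightarrow> Ifun pp (u \<circ> g) < Ifun pp (u \<circ> f) \<and> Ifun qq (u \<circ> g) < Ifun qq (u \<circ> f)"
      unfolding Hp(3)[OF f] Hp(3)[OF g] Hq(3)[OF f] Hq(3)[OF g] by (rule P2[OF f g])
  qed
  show ?thesis unfolding represents_def
    by (intro conjI; fact uaff nc Hp(1,2) Hq(1,2) le pr)
qed

end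


lemma const_B0': "algebra UNIV \<Sigma> \<Longrightarrow> (\<lambda>s. c) \<in> B0 \<Sigma>"
proof -
  assume alg: "algebra UNIV \<Sigma>"
  interpret algebra UNIV \<Sigma> by (rule alg)
  have "(\<lambda>s::'a. c) -` {r} = (if r = c then UNIV else {})" for r by auto
  then show ?thesis unfolding B0_def using top by auto
qed

lemma B0_shift: "algebra UNIV \<Sigma> \<Longrightarrow> \<psi> \<in> B0 \<Sigma> \<Longrightarrow> (\<lambda>s. a * \<psi> s + c) \<in> B0 \<Sigma>"
  using comp_B0[of \<Sigma> \<psi> "\<lambda>r. a * r + c"] unfolding B0_def by auto

lemma I_const:
  assumes alg: "algebra UNIV \<Sigma>" and cl: "constant_linear \<Sigma> I"
  shows "I (\<lambda>s. c) = c"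
proof -
  have h: "\<And>\<phi> a b. \<phi> \<in> B0 \<Sigma> \<Longrightarrow> 0 \<le> a \<Longrightarrow> I (\<lambda>s. a * \<phi> s + b) = a * I \<phi> + b"
    using cl unfolding constant_linear_def by blast
  show ?thesis using h[OF const_B0'[OF alg, of 0], of 0 c] by simp
qed

lemma I_lip:
  assumes alg: "algebra UNIV \<Sigma>" and cl: "constant_linear \<Sigma> I" and mo: "monotonic \<Sigma> I"
    and phi: "\<phi> \<in> B0 \<Sigma>" and psi: "\<psi> \<in> B0 \<Sigma>" and le: "\<And>s. \<phi> s \<le> \<psi> s + c"
  shows "I \<phi> \<le> I \<psi> + c"
proof -
  have "(\<lambda>s. 1 * \<psi> s + c) \<in> B0 \<Sigma>" using B0_shift[OF alg psi] .
  then have "I \<phi> \<le> I (\<lambda>s. 1 * \<psi> s + c)" using mo phi le unfolding monotonic_def by simp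
  also have "\<dots> = 1 * I \<psi> + c" using cl psi unfolding constant_linear_def by (meson zero_le_one)
  finally show ?thesis by simp
qed

lemma I_bounds:
  assumes alg: "algebra UNIV \<Sigma>" and cl: "constant_linear \<Sigma> I" and mo: "monotonic \<Sigma> I"
    and phi: "\<phi> \<in> B0 \<Sigma>"
  shows "\<exists>s1 s2. \<phi> s1 \<le> I \<phi> \<and> I \<phi> \<le> \<phi> s2"
proof -
  have fin: "finite (range \<phi>)" using phi unfolding B0_def by auto
  obtain s1 where s1: "Min (range \<phi>) = \<phi> s1" using Min_in[OF fin] by auto
  obtain s2 where s2: "Max (range \<phi>) = \<phi> s2" using Max_in[OF fin] by auto
  have m: "\<And>\<phi> \<psi>. \<phi> \<in> B0 \<Sigma> \<Longrightarrow> \<psi> \<in> B0 \<Sigma> \<Longrightarrow> (\<forall>s. \<psi> s \<le> \<phi> s) \<Longrightarrow> I \<psi> \<le> I \<phi>"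
    using mo unfolding monotonic_def by blast
  have "\<phi> s1 \<le> \<phi> s" for s using s1 fin by (metis Min_le rangeI)
  then have "I (\<lambda>s. \<phi> s1) \<le> I \<phi>" using m[OF phi const_B0'[OF alg, of "\<phi> s1"]] by blast
  moreover have "\<phi> s \<le> \<phi> s2" for s using s2 fin by (metis Max_ge rangeI)
  then have "I \<phi> \<le> I (\<lambda>s. \<phi> s2)" using m[OF const_B0'[OF alg, of "\<phi> s2"] phi] by blast
  ultimately have "\<phi> s1 \<le> I \<phi> \<and> I \<phi> \<le> \<phi> s2" using I_const[OF alg cl, of "\<phi> s1"] I_const[OF alg cl, of "\<phi> s2"] by simp
  then show ?thesis by blast
qed

lemma open_lip:
  fixes F G :: "real \<Rightarrow> real"
  assumes K: "K \<ge> 0"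
    and LF: "\<And>a b. a \<in> {0..1} \<Longrightarrow> b \<in> {0..1} \<Longrightarrow> F b \<ge> F a - K * \<bar>b - a\<bar>"
    and LG: "\<And>a b. a \<in> {0..1} \<Longrightarrow> b \<in> {0..1} \<Longrightarrow> G b \<ge> G a - K * \<bar>b - a\<bar>"
  shows "openin (top_of_set {0..1}) {t\<in>{0..1}. c < F t \<and> d < G t}"
  unfolding openin_euclidean_subtopology_iff
proof (intro conjI ballI)
  show "{t\<in>{0..1}. c < F t \<and> d < G t} \<subseteq> {0..1}" by auto
  fix t assume t: "t \<in> {t\<in>{0..1}. c < F t \<and> d < G t}"
  define e where "e = min (F t - c) (G t - d) / (K + 1)"
  have e: "e > 0" using t K by (auto simp: e_def)
  have "t' \<in> {t\<in>{0..1}. c < F t \<and> d < G t}" if t': "t' \<in> {0..1}" "dist t' t < e" for t'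
  proof -
    have d: "\<bar>t' - t\<bar> < e" using t' by (simp add: dist_real_def)
    have "K * \<bar>t' - t\<bar> \<le> K * e" using d K by (simp add: mult_left_mono)
    also have "K * e < min (F t - c) (G t - d)"
    proof -
      have "K * e = min (F t - c) (G t - d) * (K / (K + 1))" using K by (simp add: e_def field_simps)
      also have "\<dots> < min (F t - c) (G t - d) * 1" using K t by (intro mult_strict_left_mono) auto
      finally show ?thesis by simp
    qed
    finally have "K * \<bar>t' - t\<bar> < min (F t - c) (G t - d)" .
    then show ?thesis using LF[of t t'] LG[of t t'] t t' by auto
  qed
  then show "\<exists>e>0. \<forall>x'\<in>{0..1}. dist x' t < e \<longrightarrow> x' \<in> {t\<in>{0..1}. c < F t \<and> d < G t}" using e by blast
qed

locale repd =
  fixes \<Sigma> :: "'s set set" and X :: "'x::real_vector set" and P :: "('s \<Rightarrow> 'x) \<Rightarrow> ('s \<Rightarrow> 'x) \<Rightarrow> bool"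
    and u :: "'x \<Rightarrow> real" and Ip Io :: "('s \<Rightarrow> real) \<Rightarrow> real"
  assumes alg: "algebra UNIV \<Sigma>" and cvx: "convex X" and R: "represents \<Sigma> X P u Ip Io"
begin

lemma uaff: "affine_on X u" using R unfolding represents_def by blast
lemma nc: "\<exists>x\<in>X. \<exists>y\<in>X. u x \<noteq> u y" using R unfolding represents_def by blast
lemma clp: "constant_linear \<Sigma> Ip" using R unfolding represents_def by blast
lemma clo: "constant_linear \<Sigma> Io" using R unfolding represents_def by blast
lemma mop: "monotonic \<Sigma> Ip" using R unfolding represents_def by blast
lemma moo: "monotonic \<Sigma> Io" using R unfolding represents_def by blast
lemma lepo: "h \<in> acts \<Sigma> X \<Longrightarrow> Ip (u \<circ> h) \<le> Io (u \<circ> h)" using R unfolding represents_def by blast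
lemma rep: "f \<in> acts \<Sigma> X \<Longrightarrow> g \<in> acts \<Sigma> X \<Longrightarrow> P f g \<longleftrightarrow> Ip (u \<circ> g) < Ip (u \<circ> f) \<and> Io (u \<circ> g) < Io (u \<circ> f)"
  using R unfolding represents_def by blast

lemma cstA: "x \<in> X \<Longrightarrow> cst x \<in> acts \<Sigma> X" using cst_acts[OF alg] .
lemma actX: "f \<in> acts \<Sigma> X \<Longrightarrow> f s \<in> X" unfolding acts_def by auto

lemma uB0: "f \<in> acts \<Sigma> X \<Longrightarrow> u \<circ> f \<in> B0 \<Sigma>"
  using comp_B0[OF alg, of f u] unfolding acts_def comp_def by auto

lemma u_cst: "u \<circ> cst x = (\<lambda>s. u x)" by (simp add: cst_def comp_def)

lemma cst_ord: "x \<in> X \<Longrightarrow> y \<in> X \<Longrightarrow> P (cst x) (cst y) \<longleftrightarrow> u y < u x"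
  using rep[OF cstA cstA] I_const[OF alg clp] I_const[OF alg clo] by (simp add: u_cst)

lemma Pr: "f \<in> acts \<Sigma> X \<Longrightarrow> x \<in> X \<Longrightarrow> P f (cst x) \<longleftrightarrow> u x < Ip (u \<circ> f)"
  using rep[OF _ cstA] I_const[OF alg clp] I_const[OF alg clo] lepo[of f] by (auto simp: u_cst)

lemma Pl: "f \<in> acts \<Sigma> X \<Longrightarrow> x \<in> X \<Longrightarrow> P (cst x) f \<longleftrightarrow> Io (u \<circ> f) < u x"
  using rep[OF cstA] I_const[OF alg clp] I_const[OF alg clo] lepo[of f] by (auto simp: u_cst)

lemma inX:
  assumes f: "f \<in> acts \<Sigma> X" and cl: "constant_linear \<Sigma> I" and mo: "monotonic \<Sigma> I"
  shows "\<exists>x\<in>X. u x = I (u \<circ> f)"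
proof -
  obtain s1 s2 where "(u \<circ> f) s1 \<le> I (u \<circ> f)" "I (u \<circ> f) \<le> (u \<circ> f) s2"
    using I_bounds[OF alg cl mo uB0[OF f]] by blast
  then show ?thesis using ivt_aff[OF cvx uaff actX[OF f] actX[OF f]] by simp
qed

lemma incomp_char: "f \<in> acts \<Sigma> X \<Longrightarrow> x \<in> X \<Longrightarrow> incomp P f (cst x) \<longleftrightarrow> Ip (u \<circ> f) \<le> u x \<and> u x \<le> Io (u \<circ> f)"
  unfolding incomp_def using Pr Pl by force

lemma ax1: "A1 \<Sigma> X P"
proof -
  obtain x y where xy: "x \<in> X" "y \<in> X" "u x \<noteq> u y" using nc by blast
  have "\<exists>x\<in>X. \<exists>y\<in>X. P (cst x) (cst y)"
  proof (cases "u y < u x")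
    case True then show ?thesis using cst_ord xy by blast
  next
    case False then have "u x < u y" using xy by simp
    then show ?thesis using cst_ord xy by blast
  qed
  moreover have "\<forall>f\<in>acts \<Sigma> X. \<forall>g\<in>acts \<Sigma> X. P f g \<longrightarrow> \<not> P g f" using rep by auto
  moreover have "\<forall>f\<in>acts \<Sigma> X. \<forall>g\<in>acts \<Sigma> X. \<forall>h\<in>acts \<Sigma> X. P f g \<and> P g h \<longrightarrow> P f h" using rep by auto
  moreover have "\<forall>x\<in>X. \<forall>y\<in>X. \<forall>z\<in>X. \<not> P (cst x) (cst y) \<and> \<not> P (cst y) (cst z) \<longrightarrow> \<not> P (cst x) (cst z)"
    using cst_ord by auto
  ultimately show ?thesis unfolding A1_def by blast
qed

lemma u_mix2: "f \<in> acts \<Sigma> X \<Longrightarrow> g \<in> acts \<Sigma> X \<Longrightarrow> 0 \<le> a \<Longrightarrow> a \<le> 1 \<Longrightarrow>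
   u \<circ> mix a f g = (\<lambda>s. a * u (f s) + (1 - a) * u (g s))"
  using uaff actX unfolding affine_on_def mix_def comp_def by auto

lemma mixA2: "f \<in> acts \<Sigma> X \<Longrightarrow> g \<in> acts \<Sigma> X \<Longrightarrow> 0 \<le> a \<Longrightarrow> a \<le> 1 \<Longrightarrow> mix a f g \<in> acts \<Sigma> X"
  using mix_acts2[OF alg cvx] by blast

lemma lipmix:
  assumes f: "f \<in> acts \<Sigma> X" and g: "g \<in> acts \<Sigma> X" and cl: "constant_linear \<Sigma> I" and mo: "monotonic \<Sigma> I"
  shows "\<exists>K\<ge>0. \<forall>a\<in>{0..1}. \<forall>b\<in>{0..1}. I (u \<circ> mix b f g) \<ge> I (u \<circ> mix a f g) - K * \<bar>b - a\<bar>"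
proof -
  have fin1: "finite (range (\<lambda>s. \<bar>u (f s)\<bar>))" and fin2: "finite (range (\<lambda>s. \<bar>u (g s)\<bar>))"
    using comp_meas(1)[OF alg, of f "\<lambda>x. \<bar>u x\<bar>"] comp_meas(1)[OF alg, of g "\<lambda>x. \<bar>u x\<bar>"] f g
    unfolding acts_def by auto
  define K where "K = Max (range (\<lambda>s. \<bar>u (f s)\<bar>)) + Max (range (\<lambda>s. \<bar>u (g s)\<bar>))"
  have bd: "\<bar>u (f s) - u (g s)\<bar> \<le> K" for s
  proof -
    have "\<bar>u (f s)\<bar> \<le> Max (range (\<lambda>s. \<bar>u (f s)\<bar>))" "\<bar>u (g s)\<bar> \<le> Max (range (\<lambda>s. \<bar>u (g s)\<bar>))"
      using fin1 fin2 by auto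
    then show ?thesis unfolding K_def by linarith
  qed
  have K: "K \<ge> 0" using bd[of undefined] by linarith
  have "I (u \<circ> mix b f g) \<ge> I (u \<circ> mix a f g) - K * \<bar>b - a\<bar>" if a: "a \<in> {0..1}" and b: "b \<in> {0..1}" for a b
  proof -
    have "(u \<circ> mix a f g) s \<le> (u \<circ> mix b f g) s + K * \<bar>b - a\<bar>" for s
    proof -
      have "(u \<circ> mix a f g) s - (u \<circ> mix b f g) s = (a - b) * (u (f s) - u (g s))"
        using u_mix2[OF f g] a b by (simp add: algebra_simps)
      also have "\<dots> \<le> \<bar>b - a\<bar> * K" using bd[of s]
        by (metis abs_ge_self abs_minus_commute abs_mult abs_ge_zero mult_left_mono order_trans)
      finally show ?thesis by (simp add: mult.commute)
    qed
    then have "I (u \<circ> mix a f g) \<le> I (u \<circ> mix b f g) + K * \<bar>b - a\<bar>"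
      using I_lip[OF alg cl mo uB0 uB0] mixA2[OF f g] a b by auto
    then show ?thesis by simp
  qed
  then show ?thesis using K by blast
qed

lemma ax2: "A2 \<Sigma> X P"
  unfolding A2_def
proof (intro ballI conjI)
  fix f g h assume f: "f \<in> acts \<Sigma> X" and g: "g \<in> acts \<Sigma> X" and h: "h \<in> acts \<Sigma> X"
  obtain K1 where K1: "K1 \<ge> 0" "\<forall>a\<in>{0..1}. \<forall>b\<in>{0..1}. Ip (u \<circ> mix b f g) \<ge> Ip (u \<circ> mix a f g) - K1 * \<bar>b - a\<bar>"
    using lipmix[OF f g clp mop] by blast
  obtain K2 where K2: "K2 \<ge> 0" "\<forall>a\<in>{0..1}. \<forall>b\<in>{0..1}. Io (u \<circ> mix b f g) \<ge> Io (u \<circ> mix a f g) - K2 * \<bar>b - a\<bar>"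
    using lipmix[OF f g clo moo] by blast
  define K where "K = max K1 K2"
  have KK: "K1 * \<bar>b - a\<bar> \<le> K * \<bar>b - a\<bar>" "K2 * \<bar>b - a\<bar> \<le> K * \<bar>b - a\<bar>" for a b :: real
    by (auto simp: K_def intro: mult_right_mono)
  have L1: "Ip (u \<circ> mix b f g) \<ge> Ip (u \<circ> mix a f g) - K * \<bar>b - a\<bar>" if "a \<in> {0..1}" "b \<in> {0..1}" for a b
    using K1(2) that KK[of b a] by fastforce
  have L2: "Io (u \<circ> mix b f g) \<ge> Io (u \<circ> mix a f g) - K * \<bar>b - a\<bar>" if "a \<in> {0..1}" "b \<in> {0..1}" for a b
    using K2(2) that KK[of b a] by fastforce
  have K: "K \<ge> 0" using K1 by (simp add: K_def)
  have "{t\<in>{0..1::real}. P (mix t f g) h} = {t\<in>{0..1}. Ip (u \<circ> h) < Ip (u \<circ> mix t f g) \<and> Io (u \<circ> h) < Io (u \<circ> mix t f g)}"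
    using rep[OF mixA2[OF f g] h] by auto
  also have "openin (top_of_set {0..1}) \<dots>"
    using open_lip[OF K, of "\<lambda>t. Ip (u \<circ> mix t f g)" "\<lambda>t. Io (u \<circ> mix t f g)"] L1 L2 by blast
  finally show "openin (top_of_set {0..1}) {t\<in>{0..1::real}. P (mix t f g) h}" .
  have "{t\<in>{0..1::real}. P h (mix t f g)} = {t\<in>{0..1}. - Ip (u \<circ> h) < - Ip (u \<circ> mix t f g) \<and> - Io (u \<circ> h) < - Io (u \<circ> mix t f g)}"
    using rep[OF h mixA2[OF f g]] by auto
  also have "openin (top_of_set {0..1}) \<dots>"
  proof (rule open_lip[OF K])
    fix a b :: real assume ab: "a \<in> {0..1}" "b \<in> {0..1}"
    show "- Ip (u \<circ> mix a f g) - K * \<bar>b - a\<bar> \<le> - Ip (u \<circ> mix b f g)" using L1[OF ab(2,1)] by (simp add: abs_minus_commute)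
    show "- Io (u \<circ> mix a f g) - K * \<bar>b - a\<bar> \<le> - Io (u \<circ> mix b f g)" using L2[OF ab(2,1)] by (simp add: abs_minus_commute)
  qed
  finally show "openin (top_of_set {0..1}) {t\<in>{0..1::real}. P h (mix t f g)}" .
qed


lemma I_mixc:
  assumes f: "f \<in> acts \<Sigma> X" and x: "x \<in> X" and a: "0 \<le> a" "a \<le> 1" and cl: "constant_linear \<Sigma> I"
  shows "I (u \<circ> mix a f (cst x)) = a * I (u \<circ> f) + (1 - a) * u x"
proof -
  have h: "\<And>\<phi> a b. \<phi> \<in> B0 \<Sigma> \<Longrightarrow> 0 \<le> a \<Longrightarrow> I (\<lambda>s. a * \<phi> s + b) = a * I \<phi> + b"
    using cl unfolding constant_linear_def by blast
  have "u \<circ> mix a f (cst x) = (\<lambda>s. a * (u \<circ> f) s + (1 - a) * u x)"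
    using u_mix2[OF f cstA[OF x] a] by (simp add: cst_def comp_def)
  then show ?thesis using h[OF uB0[OF f] a(1), of "(1 - a) * u x"] by simp
qed

lemma ax3: "A3 \<Sigma> X P"
  unfolding A3_def
proof (intro ballI)
  fix f g x a assume f: "f \<in> acts \<Sigma> X" and g: "g \<in> acts \<Sigma> X" and x: "x \<in> X" and a: "a \<in> {0<..<1::real}"
  have a': "0 \<le> a" "a \<le> 1" "0 < a" using a by auto
  have m: "mix a f (cst x) \<in> acts \<Sigma> X" "mix a g (cst x) \<in> acts \<Sigma> X"
    using mixA2[OF f cstA[OF x] a'(1,2)] mixA2[OF g cstA[OF x] a'(1,2)] by auto
  show "P f g \<longleftrightarrow> P (mix a f (cst x)) (mix a g (cst x))"
    unfolding rep[OF f g] rep[OF m] I_mixc[OF f x a'(1,2) clp] I_mixc[OF g x a'(1,2) clp]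
      I_mixc[OF f x a'(1,2) clo] I_mixc[OF g x a'(1,2) clo]
    using a'(3) by simp
qed

lemma ax5: "A5 \<Sigma> X P"
  unfolding A5_def
proof (intro ballI impI)
  fix f g assume f: "f \<in> acts \<Sigma> X" and g: "g \<in> acts \<Sigma> X" and H: "\<forall>s. P (cst (f s)) (cst (g s))"
  have lt: "u (g s) < u (f s)" for s using H cst_ord[OF actX[OF f] actX[OF g]] by blast
  let ?d = "\<lambda>s. u (f s) - u (g s)"
  have "range ?d \<subseteq> (\<lambda>p. u (fst p) - u (snd p)) ` (range f \<times> range g)"
  proof
    fix r assume "r \<in> range ?d"
    then obtain s where "r = ?d s" by blast
    then show "r \<in> (\<lambda>p. u (fst p) - u (snd p)) ` (range f \<times> range g)"
      by (intro image_eqI[of _ _ "(f s, g s)"]) auto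
  qed
  moreover have "finite (range f)" "finite (range g)" using f g unfolding acts_def by auto
  ultimately have fin: "finite (range ?d)" by (meson finite_SigmaI finite_imageI finite_subset)
  define ep where "ep = Min (range ?d)"
  have "ep \<in> range ?d" unfolding ep_def using fin by (intro Min_in) auto
  then have ep: "ep > 0" using lt by auto
  have le: "(u \<circ> g) s \<le> (u \<circ> f) s + (- ep)" for s
  proof -
    have "ep \<le> ?d s" unfolding ep_def using fin by (intro Min_le) auto
    then show ?thesis by simp
  qed
  have "Ip (u \<circ> g) \<le> Ip (u \<circ> f) + (- ep)" by (rule I_lip[OF alg clp mop uB0[OF g] uB0[OF f] le])
  moreover have "Io (u \<circ> g) \<le> Io (u \<circ> f) + (- ep)" by (rule I_lip[OF alg clo moo uB0[OF g] uB0[OF f] le])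
  ultimately show "P f g" using rep[OF f g] ep by simp
qed

lemma ax6: "A6 \<Sigma> X P"
  unfolding A6_def
proof (intro ballI impI)
  fix f g assume f: "f \<in> acts \<Sigma> X" and g: "g \<in> acts \<Sigma> X"
    and H: "\<forall>x\<in>X. incomp P f (cst x) \<longrightarrow> incomp P g (cst x)"
  obtain x1 where x1: "x1 \<in> X" "u x1 = Ip (u \<circ> f)" using inX[OF f clp mop] by blast
  obtain x2 where x2: "x2 \<in> X" "u x2 = Io (u \<circ> f)" using inX[OF f clo moo] by blast
  have "incomp P f (cst x1)" "incomp P f (cst x2)" using incomp_char[OF f] x1 x2 lepo[OF f] by auto
  then have "incomp P g (cst x1)" "incomp P g (cst x2)" using H x1 x2 by auto
  then have "Ip (u \<circ> g) \<le> Ip (u \<circ> f)" "Io (u \<circ> f) \<le> Io (u \<circ> g)" using incomp_char[OF g] x1 x2 by auto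
  then show "incomp P f g" unfolding incomp_def using rep[OF f g] rep[OF g f] by auto
qed

lemma ax7: "A7 \<Sigma> X P"
  unfolding A7_def
proof (intro ballI impI)
  fix f g x y assume f: "f \<in> acts \<Sigma> X" and g: "g \<in> acts \<Sigma> X" and x: "x \<in> X" and y: "y \<in> X"
    and H: "incomp P f (cst x) \<and> P (cst x) g \<and> incomp P g (cst y) \<and> P f (cst y)"
  have "Ip (u \<circ> f) \<le> u x \<and> u x \<le> Io (u \<circ> f)" using H incomp_char[OF f x] by blast
  moreover have "Io (u \<circ> g) < u x" using H Pl[OF g x] by blast
  moreover have "Ip (u \<circ> g) \<le> u y \<and> u y \<le> Io (u \<circ> g)" using H incomp_char[OF g y] by blast
  moreover have "u y < Ip (u \<circ> f)" using H Pr[OF f y] by blast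
  ultimately show "P f g" using rep[OF f g] by linarith
qed

lemma all_axioms: "A1 \<Sigma> X P \<and> A2 \<Sigma> X P \<and> A3 \<Sigma> X P \<and> A5 \<Sigma> X P \<and> A6 \<Sigma> X P \<and> A7 \<Sigma> X P"
  using ax1 ax2 ax3 ax5 ax6 ax7 by blast

lemma embed_rep:
  assumes phi: "\<phi> \<in> B0 \<Sigma>"
  shows "\<exists>a b f. a > 0 \<and> f \<in> acts \<Sigma> X \<and> (\<forall>s. u (f s) = a * \<phi> s + b)"
proof -
  obtain y0 y1 where y: "y0 \<in> X" "y1 \<in> X" "u y0 < u y1"
    using nc by (metis linorder_neqE_linordered_idom)
  have fin: "finite (range \<phi>)" and pre: "\<forall>r. \<phi> -` {r} \<in> \<Sigma>" using phi unfolding B0_def by auto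
  define m where "m = Min (range \<phi>)"
  define M where "M = Max (range \<phi>)"
  have bnd: "\<forall>s. m \<le> \<phi> s \<and> \<phi> s \<le> M" using fin unfolding m_def M_def by auto
  have mM: "m \<le> M" using bnd by (meson order_trans)
  have a: "(u y1 - u y0) / (M - m + 1) > 0" using y mM by simp
  show ?thesis using embed[OF alg cvx uaff y fin pre bnd] a by blast
qed

end

lemma eq_from_X:
  assumes H: "\<And>x. x \<in> X \<Longrightarrow> (u x < (A::real) \<longleftrightarrow> u x < B)" and a: "\<exists>x\<in>X. u x = A" and b: "\<exists>x\<in>X. u x = B"
  shows "A = B"
  using H a b by (metis linorder_neqE_linordered_idom less_irrefl)

lemma uniq_u:
  assumes alg: "algebra UNIV \<Sigma>" and cvx: "convex X"
    and R1: "represents \<Sigma> X P u Ip Io" and R2: "represents \<Sigma> X P u' Ip' Io'"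
  shows "\<exists>a b. a > 0 \<and> (\<forall>x\<in>X. u' x = a * u x + b)"
proof -
  interpret A: repd \<Sigma> X P u Ip Io by (rule repd.intro[OF alg cvx R1])
  interpret B: repd \<Sigma> X P u' Ip' Io' by (rule repd.intro[OF alg cvx R2])
  have "\<forall>x\<in>X. \<forall>y\<in>X. u y < u x \<longleftrightarrow> u' y < u' x" using A.cst_ord B.cst_ord by blast
  then show ?thesis using affine_unique[OF cvx A.uaff B.uaff _ A.nc] by blast
qed

lemma uniq_I:
  assumes alg: "algebra UNIV \<Sigma>" and cvx: "convex X"
    and R1: "represents \<Sigma> X P u Ip Io" and R2: "represents \<Sigma> X P u Ip' Io'"
  shows "\<forall>\<phi>\<in>B0 \<Sigma>. Ip' \<phi> = Ip \<phi> \<and> Io' \<phi> = Io \<phi>"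
proof
  interpret A: repd \<Sigma> X P u Ip Io by (rule repd.intro[OF alg cvx R1])
  interpret B: repd \<Sigma> X P u Ip' Io' by (rule repd.intro[OF alg cvx R2])
  have acts_eq: "Ip' (u \<circ> f) = Ip (u \<circ> f) \<and> Io' (u \<circ> f) = Io (u \<circ> f)" if f: "f \<in> acts \<Sigma> X" for f
  proof
    show "Ip' (u \<circ> f) = Ip (u \<circ> f)"
    proof (rule eq_from_X[of X u])
      fix x assume x: "x \<in> X"
      show "u x < Ip' (u \<circ> f) \<longleftrightarrow> u x < Ip (u \<circ> f)" using A.Pr[OF f x] B.Pr[OF f x] by blast
    next
      show "\<exists>x\<in>X. u x = Ip' (u \<circ> f)" using B.inX[OF f B.clp B.mop] .
      show "\<exists>x\<in>X. u x = Ip (u \<circ> f)" using A.inX[OF f A.clp A.mop] .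
    qed
    have "- Io' (u \<circ> f) = - Io (u \<circ> f)"
    proof (rule eq_from_X[of X "\<lambda>x. - u x"])
      fix x assume x: "x \<in> X"
      show "- u x < - Io' (u \<circ> f) \<longleftrightarrow> - u x < - Io (u \<circ> f)" using A.Pl[OF f x] B.Pl[OF f x] by auto
    next
      show "\<exists>x\<in>X. - u x = - Io' (u \<circ> f)" using B.inX[OF f B.clo B.moo] by auto
      show "\<exists>x\<in>X. - u x = - Io (u \<circ> f)" using A.inX[OF f A.clo A.moo] by auto
    qed
    then show "Io' (u \<circ> f) = Io (u \<circ> f)" by simp
  qed
  fix \<phi> assume phi: "\<phi> \<in> B0 \<Sigma>"
  obtain a b f where w: "a > 0" "f \<in> acts \<Sigma> X" "\<forall>s. u (f s) = a * \<phi> s + b" using A.embed_rep[OF phi] by blast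
  have uf: "u \<circ> f = (\<lambda>s. a * \<phi> s + b)" using w(3) by (simp add: comp_def)
  have cl: "I (u \<circ> f) = a * I \<phi> + b" if "constant_linear \<Sigma> I" for I
    using that phi w(1) unfolding uf constant_linear_def by simp
  show "Ip' \<phi> = Ip \<phi> \<and> Io' \<phi> = Io \<phi>"
    using acts_eq[OF w(2)] cl[OF A.clp] cl[OF B.clp] cl[OF A.clo] cl[OF B.clo] w(1) by simp
qed


theorem theorem4:
  fixes \<Sigma> :: "'s set set" and X :: "'x::real_vector set"
    and P :: "('s \<Rightarrow> 'x) \<Rightarrow> ('s \<Rightarrow> 'x) \<Rightarrow> bool"
  assumes "algebra UNIV \<Sigma>"
    and "convex X" and "\<exists>x\<in>X. \<exists>y\<in>X. x \<noteq> y"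
  shows "(A1 \<Sigma> X P \<and> A2 \<Sigma> X P \<and> A3 \<Sigma> X P \<and> A5 \<Sigma> X P \<and> A6 \<Sigma> X P \<and> A7 \<Sigma> X P
            \<longleftrightarrow> (\<exists>u Ip Io. represents \<Sigma> X P u Ip Io))
       \<and> (\<forall>u Ip Io u' Ip' Io'. represents \<Sigma> X P u Ip Io \<and> represents \<Sigma> X P u' Ip' Io' \<longrightarrow>
            (\<exists>a b. a > 0 \<and> (\<forall>x\<in>X. u' x = a * u x + b)))
       \<and> (\<forall>u Ip Io Ip' Io'. represents \<Sigma> X P u Ip Io \<and> represents \<Sigma> X P u Ip' Io' \<longrightarrow>
            (\<forall>\<phi>\<in>B0 \<Sigma>. Ip' \<phi> = Ip \<phi> \<and> Io' \<phi> = Io \<phi>))"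
proof -
  note alg = assms(1) and cvx = assms(2)
  have fwd: "\<exists>u Ip Io. represents \<Sigma> X P u Ip Io"
    if ax: "A1 \<Sigma> X P \<and> A2 \<Sigma> X P \<and> A3 \<Sigma> X P \<and> A5 \<Sigma> X P \<and> A6 \<Sigma> X P \<and> A7 \<Sigma> X P"
  proof -
    from ax have a1: "A1 \<Sigma> X P" and a2: "A2 \<Sigma> X P" and a3: "A3 \<Sigma> X P" and a5: "A5 \<Sigma> X P"
      and a6: "A6 \<Sigma> X P" and a7: "A7 \<Sigma> X P" by auto
    obtain x1 x0 where x: "x1 \<in> X" "x0 \<in> X" "P (cst x1) (cst x0)" using a1 unfolding A1_def by blast
    interpret V: vnm \<Sigma> X P x0 x1 by (rule vnm.intro[OF alg cvx a1 a2 a3 x(2) x(1) x(3)])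
    have uord: "\<And>x y. x \<in> X \<Longrightarrow> y \<in> X \<Longrightarrow> P (cst x) (cst y) \<longleftrightarrow> V.U y < V.U x" using V.U_ord by blast
    have unc: "\<exists>x\<in>X. \<exists>y\<in>X. V.U x < V.U y" using V.U_nc x by blast
    interpret W: rep \<Sigma> X P V.U by (rule rep.intro[OF alg cvx a1 a2 a3 a5 a6 a7 V.U_affine uord unc])
    show ?thesis using W.represents_rep by blast
  qed
  have bwd: "A1 \<Sigma> X P \<and> A2 \<Sigma> X P \<and> A3 \<Sigma> X P \<and> A5 \<Sigma> X P \<and> A6 \<Sigma> X P \<and> A7 \<Sigma> X P"
    if "represents \<Sigma> X P u Ip Io" for u Ip Io
    using repd.all_axioms[OF repd.intro[OF alg cvx that]] .
  show ?thesis
    using fwd bwd uniq_u[OF alg cvx] uniq_I[OF alg cvx] by blast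
qed

end
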